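(* For all partial Boolean functions $f:D\to\{0,1\}$ with $D\subseteq\{0,1\}^n$, we have $\mathrm{QS}(f)\le \mathrm{QSZK}(f)$.
   Context: Query model: for $x\in\{0,1\}^n$ the quantum oracle $O_x$ acts by $O_x|i,b\rangle=|i,b\oplus x_i\rangle$ for $i\in[n]$, $b\in\{0,1\}$ (tensored with the identity on other registers). A $T$-query quantum algorithm is given by input-independent unitaries $U_0,\dots,U_T$ on $m$ qubits. On input $x$ it prepares $|\psi_x\rangle=U_TO_xU_{T-1}O_x\cdots U_1O_xU_0|0^m\rangle$, and it may output the mixed state obtained by tracing out a fixed subset of the qubits. The trace distance is $\|\rho-\sigma\|_{tr}=\tfrac12\|\rho-\sigma\|_1$. $\mathrm{QS}(f)$ is the smallest $k$ such that some $k$-query quantum algorithm, on each input $x\in D$, outputs a state $\rho_x$ with $\|\rho_x-\rho_y\|_{tr}\ge 1/6$ whenever $x,y\in D$ and $f(x)\ne f(y)$. $\mathrm{QSZK}(f)$ is the smallest $k$ such that there exist two quantum query algorithms, making $k$ queries in total, that on input $x\in D$ output states $\rho_x$ and $\sigma_x$ of the same dimension satisfying: - $\|\rho_x-\sigma_x\|_{tr}\ge 2/3$ for all $x\in D$ with $f(x)=1$; - $\|\rho_x-\sigma_x\|_{tr}\le 1/3$ for all $x\in D$ with $f(x)=0$. *)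

theory Defs
  imports "Jordan_Normal_Form.Char_Poly" "HOL-Library.Extended_Nat"
begin

definition adj :: "complex mat \<Rightarrow> complex mat" where
  "adj A = mat (dim_col A) (dim_row A) (\<lambda>(i,j). cnj (A $$ (j,i)))"

definition unitary :: "nat \<Rightarrow> complex mat \<Rightarrow> bool" where
  "unitary d U \<longleftrightarrow> U \<in> carrier_mat d d \<and> adj U * U = 1\<^sub>m d"

text \<open>Schatten 1-norm: sum of the singular values of A, i.e. the sum of the square roots
  of the eigenvalues (with algebraic multiplicity) of the PSD matrix A^* A.\<close>
definition schatten1 :: "complex mat \<Rightarrow> real" where
  "schatten1 A = (let P = char_poly (adj A * A) in
      \<Sum>\<mu>\<in>{\<mu>. poly P \<mu> = 0}. real (order \<mu> P) * sqrt (Re \<mu>))"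

definition trace_dist :: "complex mat \<Rightarrow> complex mat \<Rightarrow> real" where
  "trace_dist \<rho> \<sigma> = schatten1 (\<rho> - \<sigma>) / 2"

text \<open>Computational basis states of m qubits are indexed by s < 2^m; qubit j of s is bit j.\<close>
definition qbit :: "nat \<Rightarrow> nat \<Rightarrow> bool" where
  "qbit s j \<longleftrightarrow> odd (s div 2 ^ j)"

definition idx_qubits :: "nat \<Rightarrow> nat" where
  "idx_qubits n = (LEAST q. n \<le> 2 ^ q)"

text \<open>Query register layout: qubits 0..q-1 hold the index i (binary), qubit q holds b,
  all other qubits are untouched by the query_op. Basis states whose index register
  holds a value i >= n are left unchanged.\<close>
definition query_perm :: "nat \<Rightarrow> bool list \<Rightarrow> nat \<Rightarrow> nat" where
  "query_perm n x s = (let q = idx_qubits n; i = s mod 2 ^ q in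
      if i < n \<and> x ! i then (if qbit s q then s - 2 ^ q else s + 2 ^ q) else s)"

definition query_op :: "nat \<Rightarrow> nat \<Rightarrow> bool list \<Rightarrow> complex mat" where
  "query_op n m x = mat (2 ^ m) (2 ^ m) (\<lambda>(r,c). if r = query_perm n x c then 1 else 0)"

fun evolve :: "nat \<Rightarrow> nat \<Rightarrow> bool list \<Rightarrow> complex mat list \<Rightarrow> complex vec \<Rightarrow> complex vec" where
  "evolve n m x [] v = v"
| "evolve n m x (U # Us) v = evolve n m x Us (U *\<^sub>v (query_op n m x *\<^sub>v v))"

definition final_state :: "nat \<Rightarrow> nat \<Rightarrow> complex mat list \<Rightarrow> bool list \<Rightarrow> complex vec" where
  "final_state n m Us x = evolve n m x (tl Us) (hd Us *\<^sub>v unit_vec (2 ^ m) 0)"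

definition embed :: "nat list \<Rightarrow> nat \<Rightarrow> nat" where
  "embed K a = (\<Sum>j<length K. if qbit a j then 2 ^ (K ! j) else 0)"

definition partial_trace :: "nat \<Rightarrow> nat set \<Rightarrow> complex vec \<Rightarrow> complex mat" where
  "partial_trace m S \<psi> = (let K = sorted_list_of_set ({0..<m} - S); L = sorted_list_of_set S in
     mat (2 ^ length K) (2 ^ length K) (\<lambda>(a,a').
       \<Sum>t<2 ^ length L. \<psi> $ (embed K a + embed L t) * cnj (\<psi> $ (embed K a' + embed L t))))"

text \<open>A quantum query algorithm on m qubits with unitaries U0..UT (T = length Us - 1)
  tracing out the qubits in S.\<close>
definition valid_alg :: "nat \<Rightarrow> nat \<Rightarrow> complex mat list \<Rightarrow> nat set \<Rightarrow> bool" where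
  "valid_alg n m Us S \<longleftrightarrow> Us \<noteq> [] \<and> idx_qubits n < m \<and> (\<forall>U\<in>set Us. unitary (2 ^ m) U)
     \<and> S \<subseteq> {0..<m}"

definition alg_output :: "nat \<Rightarrow> nat \<Rightarrow> complex mat list \<Rightarrow> nat set \<Rightarrow> bool list \<Rightarrow> complex mat" where
  "alg_output n m Us S x = partial_trace m S (final_state n m Us x)"

definition QS_ach :: "nat \<Rightarrow> bool list set \<Rightarrow> (bool list \<Rightarrow> bool) \<Rightarrow> nat \<Rightarrow> bool" where
  "QS_ach n D f k \<longleftrightarrow> (\<exists>m Us S. valid_alg n m Us S \<and> length Us = k + 1 \<and>
     (\<forall>x\<in>D. \<forall>y\<in>D. f x \<noteq> f y \<longrightarrow> trace_dist (alg_output n m Us S x) (alg_output n m Us S y) \<ge> 1/6))"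

definition QS :: "nat \<Rightarrow> bool list set \<Rightarrow> (bool list \<Rightarrow> bool) \<Rightarrow> enat" where
  "QS n D f = Inf {enat k | k. QS_ach n D f k}"

definition QSZK_ach :: "nat \<Rightarrow> bool list set \<Rightarrow> (bool list \<Rightarrow> bool) \<Rightarrow> nat \<Rightarrow> bool" where
  "QSZK_ach n D f k \<longleftrightarrow> (\<exists>m1 Us1 S1 m2 Us2 S2.
     valid_alg n m1 Us1 S1 \<and> valid_alg n m2 Us2 S2 \<and>
     (length Us1 - 1) + (length Us2 - 1) = k \<and>
     (\<forall>x\<in>D. dim_row (alg_output n m1 Us1 S1 x) = dim_row (alg_output n m2 Us2 S2 x)) \<and>
     (\<forall>x\<in>D. f x \<longrightarrow> trace_dist (alg_output n m1 Us1 S1 x) (alg_output n m2 Us2 S2 x) \<ge> 2/3) \<and>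
     (\<forall>x\<in>D. \<not> f x \<longrightarrow> trace_dist (alg_output n m1 Us1 S1 x) (alg_output n m2 Us2 S2 x) \<le> 1/3))"

definition QSZK :: "nat \<Rightarrow> bool list set \<Rightarrow> (bool list \<Rightarrow> bool) \<Rightarrow> enat" where
  "QSZK n D f = Inf {enat k | k. QSZK_ach n D f k}"

end

theory Submission imports Defs "Jordan_Normal_Form.Schur_Decomposition" begin


lemma mult_index: "i < dim_row A \<Longrightarrow> j < dim_col B \<Longrightarrow> dim_col A = dim_row B \<Longrightarrow>
  (A * B) $$ (i,j) = (\<Sum>l<dim_row B. A $$ (i,l) * B $$ (l,j))"
  by (simp add: index_mult_mat scalar_prod_def atLeast0LessThan)

declare index_mult_mat(1)[simp del]
declare mult_index[simp]

lemma adj_dim[simp]: "dim_row (adj A) = dim_col A" "dim_col (adj A) = dim_row A"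
  unfolding adj_def by auto

lemma adj_index[simp]: "i < dim_col A \<Longrightarrow> j < dim_row A \<Longrightarrow> adj A $$ (i,j) = cnj (A $$ (j,i))"
  unfolding adj_def by auto

lemma adj_carrier[simp]: "A \<in> carrier_mat r c \<Longrightarrow> adj A \<in> carrier_mat c r"
  unfolding adj_def by auto

lemma adj_adj[simp]: "adj (adj A) = A"
  by (rule eq_matI, auto)

lemma cnj_scalar_prod: "dim_vec v = dim_vec w \<Longrightarrow> cnj (v \<bullet> w) = (\<Sum>i<dim_vec w. cnj (v $ i) * cnj (w $ i))"
  unfolding scalar_prod_def by (simp add: atLeast0LessThan)

lemma adj_mult: assumes "A \<in> carrier_mat n m" "B \<in> carrier_mat m k"
  shows "adj (A * B) = adj B * adj A"
proof (rule eq_matI)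
  fix i j assume ij: "i < dim_row (adj B * adj A)" "j < dim_col (adj B * adj A)"
  hence i: "i < k" and j: "j < n" using assms by auto
  have "adj (A * B) $$ (i, j) = cnj (\<Sum>l<m. A $$ (j,l) * B $$ (l,i))" using assms i j by auto
  also have "\<dots> = (\<Sum>l<m. cnj (B $$ (l,i)) * cnj (A $$ (j,l)))"
    by (simp add: cnj_sum mult.commute)
  also have "\<dots> = (adj B * adj A) $$ (i,j)" using assms i j by auto
  finally show "adj (A * B) $$ (i, j) = (adj B * adj A) $$ (i, j)" .
qed (insert assms, auto)

lemma adj_one[simp]: "adj (1\<^sub>m n) = 1\<^sub>m n"
  by (rule eq_matI, auto)

lemma unitaryD: "unitary n U \<Longrightarrow> U \<in> carrier_mat n n" "unitary n U \<Longrightarrow> adj U * U = 1\<^sub>m n"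
  unfolding unitary_def by auto

lemma unitary_right: assumes "unitary n U" shows "U * adj U = 1\<^sub>m n"
  using mat_mult_left_right_inverse[of "adj U" n U] assms unfolding unitary_def by auto

lemma unitary_one[simp]: "unitary n (1\<^sub>m n)"
  unfolding unitary_def by auto

lemma unitary_adj: assumes "unitary n U" shows "unitary n (adj U)"
  using unitary_right[OF assms] assms unfolding unitary_def by auto

lemma unitary_mult: assumes U: "unitary n U" and V: "unitary n V" shows "unitary n (U * V)"
proof -
  have cU: "U \<in> carrier_mat n n" and cV: "V \<in> carrier_mat n n" using U V unitaryD by auto
  have "adj (U * V) * (U * V) = adj V * adj U * (U * V)"
    using cU cV by (simp add: adj_mult[OF cU cV])
  also have "\<dots> = adj V * (adj U * (U * V))"
    using cU cV by (meson adj_carrier assoc_mult_mat mult_carrier_mat)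
  also have "adj U * (U * V) = (adj U * U) * V"
    using cU cV by (metis adj_carrier assoc_mult_mat)
  also have "\<dots> = V" using U cV unfolding unitary_def by auto
  also have "adj V * V = 1\<^sub>m n" using V unfolding unitary_def by auto
  finally show ?thesis using cU cV unfolding unitary_def by auto
qed

definition tr :: "complex mat \<Rightarrow> complex" where
  "tr A = (\<Sum>i<dim_row A. A $$ (i,i))"

lemma tr_mult_comm: assumes "A \<in> carrier_mat n m" "B \<in> carrier_mat m n"
  shows "tr (A * B) = tr (B * A)"
proof -
  have "tr (A * B) = (\<Sum>i<n. \<Sum>l<m. A $$ (i,l) * B $$ (l,i))"
    unfolding tr_def scalar_prod_def using assms by (auto simp: atLeast0LessThan intro!: sum.cong)
  also have "\<dots> = (\<Sum>l<m. \<Sum>i<n. B $$ (l,i) * A $$ (i,l))"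
    by (subst sum.swap) (simp add: mult.commute)
  also have "\<dots> = tr (B * A)"
    unfolding tr_def scalar_prod_def using assms by (auto simp: atLeast0LessThan intro!: sum.cong)
  finally show ?thesis .
qed

lemma tr_minus: assumes "W \<in> carrier_mat n n" "A \<in> carrier_mat n n" "B \<in> carrier_mat n n"
  shows "tr (W * (A - B)) = tr (W * A) - tr (W * B)"
  using assms by (simp add: mult_minus_distrib_mat[of W n n A n B] tr_def sum_subtractf)

definition diagm :: "nat \<Rightarrow> (nat \<Rightarrow> complex) \<Rightarrow> complex mat" where
  "diagm n d = mat n n (\<lambda>(i,j). if i = j then d i else 0)"

lemma diagm_carrier[simp]: "diagm n d \<in> carrier_mat n n"
  unfolding diagm_def by auto

lemma diagm_dim[simp]: "dim_row (diagm n d) = n" "dim_col (diagm n d) = n"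
  unfolding diagm_def by auto

lemma mult_diagm_index: assumes "X \<in> carrier_mat r n" "i < r" "j < n"
  shows "(X * diagm n d) $$ (i,j) = X $$ (i,j) * d j"
proof -
  have "(X * diagm n d) $$ (i,j) = (\<Sum>l<n. X $$ (i,l) * (if l = j then d j else 0))"
    using assms unfolding scalar_prod_def diagm_def by (auto simp: atLeast0LessThan intro!: sum.cong)
  also have "\<dots> = (\<Sum>l<n. if l = j then X $$ (i,j) * d j else 0)"
    by (rule sum.cong) auto
  also have "\<dots> = X $$ (i,j) * d j" using assms(3) by simp
  finally show ?thesis .
qed

lemma diagm_mult: "diagm n d * diagm n e = diagm n (\<lambda>i. d i * e i)"
proof (rule eq_matI)
  fix i j assume "i < dim_row (diagm n (\<lambda>i. d i * e i))" "j < dim_col (diagm n (\<lambda>i. d i * e i))"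
  thus "(diagm n d * diagm n e) $$ (i, j) = diagm n (\<lambda>i. d i * e i) $$ (i, j)"
    by (subst mult_diagm_index[of _ n]) (auto simp: diagm_def)
qed auto

lemma adj_diagm: "adj (diagm n d) = diagm n (\<lambda>i. cnj (d i))"
  by (rule eq_matI) (auto simp: diagm_def)

lemma tr_mult_diagm: assumes "V \<in> carrier_mat n n"
  shows "tr (V * diagm n d) = (\<Sum>i<n. V $$ (i,i) * d i)"
  using assms unfolding tr_def by (auto simp del: mult_index simp: mult_diagm_index intro!: sum.cong)

lemma unitary_diagm: assumes "\<And>i. i < n \<Longrightarrow> cnj (d i) * d i = 1"
  shows "unitary n (diagm n d)"
  unfolding unitary_def adj_diagm diagm_mult using assms
  by (auto intro!: eq_matI simp: diagm_def)

lemma unitary_diag_bound: assumes "unitary n V" "i < n"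
  shows "cmod (V $$ (i,i)) \<le> 1"
proof -
  have cV: "V \<in> carrier_mat n n" using assms unitaryD by auto
  have "1 = (adj V * V) $$ (i,i)" using assms unfolding unitary_def by auto
  also have "\<dots> = (\<Sum>l<n. cnj (V $$ (l,i)) * V $$ (l,i))"
    using cV assms(2) unfolding scalar_prod_def by (auto simp: atLeast0LessThan intro!: sum.cong)
  also have "\<dots> = of_real (\<Sum>l<n. (cmod (V $$ (l,i)))\<^sup>2)"
    by (simp add: mult.commute complex_norm_square[symmetric])
  finally have s: "(\<Sum>l<n. (cmod (V $$ (l,i)))\<^sup>2) = 1"
    by (metis of_real_eq_1_iff)
  have "(cmod (V $$ (i,i)))\<^sup>2 \<le> (\<Sum>l<n. (cmod (V $$ (l,i)))\<^sup>2)"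
    using assms(2) by (intro member_le_sum) auto
  hence "(cmod (V $$ (i,i)))\<^sup>2 \<le> 1\<^sup>2" using s by simp
  thus ?thesis by (rule power2_le_imp_le) simp
qed


definition extc :: "complex \<Rightarrow> complex mat \<Rightarrow> complex mat" where
  "extc c X = mat (Suc (dim_row X)) (Suc (dim_col X)) (\<lambda>(i,j). if i = 0 \<and> j = 0 then c
     else if i = 0 \<or> j = 0 then 0 else X $$ (i - 1, j - 1))"

lemma extc_dim[simp]: "dim_row (extc c X) = Suc (dim_row X)" "dim_col (extc c X) = Suc (dim_col X)"
  unfolding extc_def by auto

lemma extc_carrier[simp]: "X \<in> carrier_mat r k \<Longrightarrow> extc c X \<in> carrier_mat (Suc r) (Suc k)"
  unfolding extc_def by auto

lemma extc_index: "i < Suc (dim_row X) \<Longrightarrow> j < Suc (dim_col X) \<Longrightarrow> extc c X $$ (i,j) =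
  (if i = 0 \<and> j = 0 then c else if i = 0 \<or> j = 0 then 0 else X $$ (i - 1, j - 1))"
  unfolding extc_def by auto

lemma extc_mult: assumes X: "X \<in> carrier_mat r k" and Y: "Y \<in> carrier_mat k c"
  shows "extc a X * extc b Y = extc (a * b) (X * Y)"
proof (rule eq_matI)
  fix i j assume "i < dim_row (extc (a * b) (X * Y))" "j < dim_col (extc (a * b) (X * Y))"
  hence i: "i < Suc r" and j: "j < Suc c" using X Y by auto
  have "(extc a X * extc b Y) $$ (i,j) = (\<Sum>l<Suc k. extc a X $$ (i,l) * extc b Y $$ (l,j))"
    using X Y i j by auto
  also have "\<dots> = extc a X $$ (i,0) * extc b Y $$ (0,j) + (\<Sum>l<k. extc a X $$ (i,Suc l) * extc b Y $$ (Suc l,j))"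
    by (rule sum.lessThan_Suc_shift)
  also have "\<dots> = extc (a * b) (X * Y) $$ (i, j)"
    using X Y i j by (cases i; cases j; auto simp: extc_index)
  finally show "(extc a X * extc b Y) $$ (i,j) = extc (a * b) (X * Y) $$ (i, j)" .
qed (insert X Y, auto)

lemma adj_extc: "adj (extc a X) = extc (cnj a) (adj X)"
  by (rule eq_matI) (auto simp: extc_index)

lemma extc_one: "extc 1 (1\<^sub>m k) = 1\<^sub>m (Suc k)"
  by (rule eq_matI) (auto simp: extc_index)

lemma diagm_extc: "extc (d 0) (diagm k (\<lambda>i. d (Suc i))) = diagm (Suc k) d"
  by (rule eq_matI) (auto simp: extc_index diagm_def)

lemma unitary_extc: assumes "unitary k P" shows "unitary (Suc k) (extc 1 P)"
proof -
  have P: "P \<in> carrier_mat k k" using assms unitaryD by auto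
  show ?thesis unfolding unitary_def adj_extc
    using extc_mult[OF adj_carrier[OF P] P, of "cnj 1" 1] assms P extc_one
    unfolding unitary_def by auto
qed

lemma cscalar_self: "w \<bullet>c w = complex_of_real (\<Sum>l<dim_vec w. (cmod (w $ l))\<^sup>2)"
proof -
  have "\<And>i. w $ i * cnj (w $ i) = (complex_of_real (cmod (w $ i)))\<^sup>2"
    by (metis complex_norm_square of_real_power)
  thus ?thesis unfolding scalar_prod_def by (auto simp: atLeast0LessThan)
qed

theorem spectral:
  assumes "A \<in> carrier_mat n n" "adj A = A"
  shows "\<exists>P r. unitary n P \<and> A = P * diagm n (\<lambda>i. complex_of_real (r i)) * adj P"
  using assms
proof (induction n arbitrary: A)
  case 0
  show ?case by (rule exI[of _ "1\<^sub>m 0"], rule exI[of _ "\<lambda>_. 0"], insert 0, auto intro!: eq_matI)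
next
  case (Suc k A)
  define n where "n = Suc k"
  have A: "A \<in> carrier_mat n n" and hA: "adj A = A" using Suc n_def by auto
  obtain as where cp: "char_poly A = (\<Prod>a\<leftarrow>as. [:- a, 1:])" and las: "length as = n"
    using char_poly_factorized[OF A] by auto
  define e where "e = hd as"
  have "e \<in> set as" using las unfolding e_def n_def by (cases as) auto
  hence "poly (char_poly A) e = 0" unfolding cp by (rule linear_poly_root)
  hence ev: "eigenvalue A e" using eigenvalue_root_char_poly[OF A] by auto
  define v where "v = find_eigenvector A e"
  from find_eigenvector[OF A ev] have "eigenvector A v e" unfolding v_def .
  hence v: "v \<in> carrier_vec n" and v0: "v \<noteq> 0\<^sub>v n" and Av: "A *\<^sub>v v = e \<cdot>\<^sub>v v"
    using A unfolding eigenvector_def by auto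
  interpret cof_vec_space n "TYPE(complex)" .
  define b where "b = basis_completion v"
  from basis_completion[OF v v0, folded b_def]
  have dist_b: "distinct b" and indep: "\<not> lin_dep (set b)" and bc: "set b \<subseteq> carrier_vec n"
    and hdb: "hd b = v" and len_b: "length b = n" by auto
  from hdb len_b obtain vs where bv: "b = v # vs" unfolding n_def by (cases b, auto)
  define ws where "ws = gram_schmidt n b"
  from gram_schmidt_result[OF bc dist_b indep refl, folded ws_def]
  have ws: "set ws \<subseteq> carrier_vec n" "corthogonal ws" "length ws = n" by (auto simp: len_b)
  from gram_schmidt_hd[OF v, of vs, folded bv] have hdws: "hd ws = v" unfolding ws_def .
  have ws0: "ws ! 0 = v" using hdws ws(3) unfolding n_def by (cases ws) auto
  have wsc: "\<And>j. j < n \<Longrightarrow> ws ! j \<in> carrier_vec n" using ws by auto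
  define s where "s = (\<lambda>j. \<Sum>l<n. (cmod (ws ! j $ l))\<^sup>2)"
  have wsself: "\<And>j. j < n \<Longrightarrow> ws ! j \<bullet>c ws ! j = complex_of_real (s j)"
    unfolding s_def using wsc by (subst cscalar_self) (auto dest: carrier_vecD)
  have spos: "\<And>j. j < n \<Longrightarrow> s j > 0"
  proof -
    fix j assume j: "j < n"
    have "s j \<ge> 0" unfolding s_def by (auto intro: sum_nonneg)
    moreover have "ws ! j \<bullet>c ws ! j \<noteq> 0" using corthogonalD[OF ws(2), of j j] ws j by auto
    ultimately show "s j > 0" using wsself[OF j] by force
  qed
  define cc where "cc = (\<lambda>j. complex_of_real (1 / sqrt (s j)))"
  define U where "U = mat n n (\<lambda>(l,j). cc j * (ws ! j $ l))"
  have U: "U \<in> carrier_mat n n" unfolding U_def by auto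
  have orth: "\<And>i j. i < n \<Longrightarrow> j < n \<Longrightarrow> (\<Sum>l<n. cnj (ws ! i $ l) * (ws ! j $ l)) = ws ! j \<bullet>c ws ! i"
    unfolding scalar_prod_def using wsc by (auto simp: atLeast0LessThan mult.commute dest: carrier_vecD intro!: sum.cong)
  have uU: "unitary n U"
  proof -
    have "adj U * U = 1\<^sub>m n"
    proof (rule eq_matI)
      fix i j assume "i < dim_row (1\<^sub>m n)" "j < dim_col (1\<^sub>m n)"
      hence i: "i < n" and j: "j < n" by auto
      have "(adj U * U) $$ (i,j) = (\<Sum>l<n. cnj (cc i * (ws ! i $ l)) * (cc j * (ws ! j $ l)))"
        using U i j unfolding U_def by auto
      also have "\<dots> = cnj (cc i) * cc j * (\<Sum>l<n. cnj (ws ! i $ l) * (ws ! j $ l))"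
        by (auto simp: sum_distrib_left intro!: sum.cong)
      also have "\<dots> = cnj (cc i) * cc j * (ws ! j \<bullet>c ws ! i)" using orth i j by simp
      also have "\<dots> = 1\<^sub>m n $$ (i,j)"
      proof (cases "i = j")
        case True
        have "cnj (cc i) * cc j * (ws ! j \<bullet>c ws ! i) = cnj (cc i) * cc i * complex_of_real (s i)"
          using True wsself[OF i] by simp
        also have "\<dots> = complex_of_real (1 / sqrt (s i) * (1 / sqrt (s i)) * s i)"
          unfolding cc_def by (simp only: of_real_mult complex_cnj_complex_of_real)
        also have "1 / sqrt (s i) * (1 / sqrt (s i)) * s i = 1" using spos[OF i]
          by (simp add: field_simps)
        finally show ?thesis using True i by simp
      next
        case False
        thus ?thesis using corthogonalD[OF ws(2), of j i] i j ws(3) by auto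
      qed
      finally show "(adj U * U) $$ (i,j) = 1\<^sub>m n $$ (i,j)" .
    qed (insert U, auto)
    thus ?thesis using U unfolding unitary_def by auto
  qed
  have UadjU: "U * adj U = 1\<^sub>m n" using unitary_right[OF uU] .
  have adjUU: "adj U * U = 1\<^sub>m n" using uU unitaryD by auto
  have AU0: "\<And>l. l < n \<Longrightarrow> (A * U) $$ (l, 0) = e * U $$ (l, 0)"
  proof -
    fix l assume l: "l < n"
    have "(A * U) $$ (l, 0) = (\<Sum>m<n. A $$ (l,m) * (cc 0 * v $ m))"
      using A U l unfolding U_def n_def by (auto simp: ws0)
    also have "\<dots> = cc 0 * (A *\<^sub>v v) $ l"
      using A v l by (auto simp: index_mult_mat_vec scalar_prod_def atLeast0LessThan sum_distrib_left intro!: sum.cong)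
    also have "\<dots> = e * U $$ (l, 0)" using Av v l unfolding U_def n_def by (auto simp: ws0)
    finally show "(A * U) $$ (l, 0) = e * U $$ (l, 0)" .
  qed
  define B where "B = adj U * (A * U)"
  have B: "B \<in> carrier_mat n n" using A U unfolding B_def by auto
  have B0: "\<And>i. i < n \<Longrightarrow> B $$ (i, 0) = (if i = 0 then e else 0)"
  proof -
    fix i assume i: "i < n"
    have "B $$ (i, 0) = (\<Sum>l<n. adj U $$ (i,l) * (A * U) $$ (l, 0))"
      unfolding B_def using A U i unfolding n_def by auto
    also have "\<dots> = e * (\<Sum>l<n. adj U $$ (i,l) * U $$ (l, 0))"
      by (auto simp: AU0 sum_distrib_left intro!: sum.cong)
    also have "(\<Sum>l<n. adj U $$ (i,l) * U $$ (l, 0)) = (adj U * U) $$ (i, 0)"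
      using U i unfolding n_def by auto
    finally show "B $$ (i, 0) = (if i = 0 then e else 0)" using adjUU i unfolding n_def by auto
  qed
  have hB: "adj B = B"
  proof -
    have "adj B = adj (A * U) * adj (adj U)" unfolding B_def by (rule adj_mult[of _ n n _ n]) (insert A U, auto)
    also have "adj (A * U) = adj U * adj A" by (rule adj_mult[OF A U])
    also have "adj U * adj A * adj (adj U) = adj U * (A * U)"
      unfolding hA adj_adj by (rule assoc_mult_mat[of _ n n _ n _ n]) (insert A U, auto)
    finally show ?thesis unfolding B_def[symmetric] .
  qed
  have Bsym: "\<And>i j. i < n \<Longrightarrow> j < n \<Longrightarrow> B $$ (i,j) = cnj (B $$ (j,i))"
  proof -
    fix i j assume i: "i < n" and j: "j < n"
    have "adj B $$ (i,j) = cnj (B $$ (j,i))" using B i j by auto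
    thus "B $$ (i,j) = cnj (B $$ (j,i))" unfolding hB .
  qed
  have er: "cnj e = e"
  proof -
    have "B $$ (0,0) = cnj (B $$ (0,0))" by (rule Bsym) (auto simp: n_def)
    moreover have "B $$ (0,0) = e" using B0[of 0] unfolding n_def by simp
    ultimately show ?thesis by simp
  qed
  have "Im (cnj e) = Im e" using er by simp
  hence "Im e = 0" by simp
  hence ereal: "e = complex_of_real (Re e)" by (simp add: complex_eq_iff)
  define A3 where "A3 = mat k k (\<lambda>(i,j). B $$ (Suc i, Suc j))"
  have A3: "A3 \<in> carrier_mat k k" unfolding A3_def by auto
  have hA3: "adj A3 = A3"
  proof (rule eq_matI)
    fix i j assume "i < dim_row A3" "j < dim_col A3"
    hence i: "i < k" and j: "j < k" using A3 by auto
    have "adj A3 $$ (i,j) = cnj (B $$ (Suc j, Suc i))" using i j unfolding A3_def by simp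
    also have "\<dots> = B $$ (Suc i, Suc j)" using Bsym[of "Suc i" "Suc j"] i j unfolding n_def by simp
    finally show "adj A3 $$ (i,j) = A3 $$ (i,j)" using i j unfolding A3_def by simp
  qed (insert A3, auto)
  have BA3: "B = extc e A3"
  proof (rule eq_matI)
    fix i j assume "i < dim_row (extc e A3)" "j < dim_col (extc e A3)"
    hence i: "i < n" and j: "j < n" using A3 unfolding n_def by auto
    show "B $$ (i,j) = extc e A3 $$ (i,j)"
    proof (cases "j = 0")
      case True thus ?thesis using B0[OF i] i A3 unfolding n_def by (auto simp: extc_index)
    next
      case False
      show ?thesis
      proof (cases "i = 0")
        case True
        thus ?thesis using Bsym[OF i j] B0[OF j] False j A3 unfolding n_def by (auto simp: extc_index)
      next
        case False2: False
        thus ?thesis using False i j A3 unfolding A3_def n_def by (auto simp: extc_index)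
      qed
    qed
  qed (insert B A3, auto simp: n_def)
  from Suc.IH[OF A3 hA3] obtain P3 r3 where uP3: "unitary k P3"
    and A3eq: "A3 = P3 * diagm k (\<lambda>i. complex_of_real (r3 i)) * adj P3" by auto
  have P3: "P3 \<in> carrier_mat k k" using uP3 unitaryD by auto
  define r where "r = (\<lambda>i. if i = 0 then Re e else r3 (i - 1))"
  define P where "P = U * extc 1 P3"
  have uP: "unitary n P" unfolding P_def using unitary_mult[OF uU, of "extc 1 P3"] unitary_extc[OF uP3] unfolding n_def by blast
  have D: "diagm n (\<lambda>i. complex_of_real (r i)) = extc e (diagm k (\<lambda>i. complex_of_real (r3 i)))"
    unfolding n_def diagm_extc[symmetric] r_def using ereal[symmetric] by simp
  define X where "X = extc 1 P3"
  define D3 where "D3 = diagm k (\<lambda>i. complex_of_real (r3 i))"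
  have X: "X \<in> carrier_mat n n" unfolding X_def n_def using P3 by auto
  have D3: "D3 \<in> carrier_mat k k" unfolding D3_def by auto
  have eD3: "extc e D3 \<in> carrier_mat n n" unfolding n_def using D3 by auto
  have E1: "X * extc e D3 * adj X = B"
  proof -
    have "X * extc e D3 = extc (1 * e) (P3 * D3)" unfolding X_def by (rule extc_mult[OF P3 D3])
    hence "X * extc e D3 * adj X = extc (1 * e) (P3 * D3) * extc (cnj 1) (adj P3)"
      unfolding X_def adj_extc by simp
    also have "\<dots> = extc (1 * e * cnj 1) (P3 * D3 * adj P3)"
      by (rule extc_mult) (insert P3 D3, auto)
    finally show ?thesis unfolding BA3 A3eq D3_def by simp
  qed
  have "P * diagm n (\<lambda>i. complex_of_real (r i)) * adj P = (U * X) * extc e D3 * (adj X * adj U)"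
    unfolding P_def D X_def[symmetric] D3_def[symmetric] adj_mult[OF U X] ..
  also have "\<dots> = U * (X * extc e D3) * (adj X * adj U)"
    unfolding assoc_mult_mat[OF U X eD3] ..
  also have "\<dots> = U * ((X * extc e D3) * (adj X * adj U))"
    by (rule assoc_mult_mat[of _ n n _ n _ n]) (insert U X eD3, auto)
  also have "(X * extc e D3) * (adj X * adj U) = (X * extc e D3 * adj X) * adj U"
    by (rule assoc_mult_mat[symmetric, of _ n n _ n _ n]) (insert U X eD3, auto)
  also have "\<dots> = B * adj U" unfolding E1 ..
  also have "U * (B * adj U) = U * B * adj U"
    by (rule assoc_mult_mat[symmetric, of _ n n _ n _ n]) (insert U B, auto)
  also have "U * B = (U * adj U) * (A * U)"
    unfolding B_def by (rule assoc_mult_mat[symmetric, of _ n n _ n _ n]) (insert U A, auto)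
  also have "\<dots> = A * U" using UadjU A U by simp
  also have "A * U * adj U = A * (U * adj U)"
    by (rule assoc_mult_mat[of _ n n _ n _ n]) (insert U A, auto)
  also have "\<dots> = A" using UadjU A by simp
  finally show ?case using uP unfolding n_def by auto
qed


lemma order_prod_linear: fixes as :: "complex list"
  shows "Polynomial.order \<mu> (\<Prod>a\<leftarrow>as. [:- a, 1:]) = count_list as \<mu>"
proof (induction as)
  case Nil
  then show ?case by (simp add: order_0I)
next
  case (Cons a as)
  have nz: "(\<Prod>a\<leftarrow>as. [:- a, 1:]) \<noteq> (0 :: complex poly)"
    by (auto simp: prod_list_zero_iff)
  have "Polynomial.order \<mu> (\<Prod>a\<leftarrow>a # as. [:- a, 1:]) = Polynomial.order \<mu> [:- a, 1:] + Polynomial.order \<mu> (\<Prod>a\<leftarrow>as. [:- a, 1:])"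
  proof -
    have "(\<Prod>a\<leftarrow>a # as. [:- a, 1:]) = [:- a, 1:] * (\<Prod>a\<leftarrow>as. [:- a, 1:])" by simp
    moreover have "[:- a, 1:] * (\<Prod>a\<leftarrow>as. [:- a, 1:]) \<noteq> 0" using nz by (metis mult_eq_0_iff pCons_eq_0_iff one_neq_zero)
    ultimately show ?thesis using order_mult by metis
  qed
  then show ?case using Cons by (simp add: order_linear')
qed

lemma roots_prod_linear: fixes as :: "complex list"
  shows "{\<mu>. poly (\<Prod>a\<leftarrow>as. [:- a, 1:]) \<mu> = 0} = set as"
  by (auto simp: poly_prod_list_zero_iff)

lemma sum_list_count_gen: assumes "finite T" "set as \<subseteq> T"
  shows "sum_list (map g as) = (\<Sum>\<mu>\<in>T. real (count_list as \<mu>) * g \<mu>)"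
  using assms(2)
proof (induction as)
  case Nil thus ?case by simp
next
  case (Cons a as)
  have aT: "a \<in> T" using Cons by auto
  have "(\<Sum>\<mu>\<in>T. real (count_list (a # as) \<mu>) * g \<mu>) = (\<Sum>\<mu>\<in>T. real (count_list as \<mu>) * g \<mu> + (if \<mu> = a then g \<mu> else 0))"
    by (rule sum.cong) (auto simp: algebra_simps)
  also have "\<dots> = (\<Sum>\<mu>\<in>T. real (count_list as \<mu>) * g \<mu>) + g a"
    using aT assms(1) by (simp add: sum.distrib)
  finally show ?case using Cons by simp
qed

lemma roots_sum: fixes as :: "complex list"
  shows "(\<Sum>\<mu>\<in>{\<mu>. poly (\<Prod>a\<leftarrow>as. [:- a, 1:]) \<mu> = 0}. real (Polynomial.order \<mu> (\<Prod>a\<leftarrow>as. [:- a, 1:])) * g \<mu>)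
    = sum_list (map g as)"
  unfolding roots_prod_linear order_prod_linear by (rule sum_list_count_gen[symmetric]) auto

lemma diag_mat_diagm: "diag_mat (diagm n d) = map d [0..<n]"
  unfolding diag_mat_def by (auto simp: diagm_def intro!: nth_equalityI)

lemma char_poly_diagm: "char_poly (diagm n d) = (\<Prod>a\<leftarrow>map d [0..<n]. [:- a, 1:])"
proof -
  have "upper_triangular (diagm n d)" unfolding upper_triangular_def diagm_def by auto
  from char_poly_upper_triangular[OF diagm_carrier this] show ?thesis unfolding diag_mat_diagm .
qed

lemma conj_prod: assumes P: "unitary n P" and X: "X \<in> carrier_mat n n" and Y: "Y \<in> carrier_mat n n"
  shows "(P * X * adj P) * (P * Y * adj P) = P * (X * Y) * adj P"
proof -
  have cP: "P \<in> carrier_mat n n" using P unitaryD by auto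
  have aP: "adj P * P = 1\<^sub>m n" using P unitaryD by auto
  have e: "adj P * (P * (Y * adj P)) = Y * adj P"
    using assoc_mult_mat[of "adj P" n n P n "Y * adj P" n] cP Y aP by simp
  show ?thesis using cP X Y e by (simp add: assoc_mult_mat[of _ n n _ n _ n])
qed

lemma tr_conj: assumes P: "unitary n P" and X: "X \<in> carrier_mat n n"
  shows "tr (P * X * adj P) = tr X"
proof -
  have cP: "P \<in> carrier_mat n n" using P unitaryD by auto
  have "tr (P * X * adj P) = tr (P * (X * adj P))" using cP X by (simp add: assoc_mult_mat[of _ n n _ n _ n])
  also have "\<dots> = tr ((X * adj P) * P)" by (rule tr_mult_comm[of _ n n]) (insert cP X, auto)
  also have "\<dots> = tr (X * (adj P * P))" using cP X by (simp add: assoc_mult_mat[of _ n n _ n _ n])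
  also have "\<dots> = tr X" using P X unitaryD by auto
  finally show ?thesis .
qed

lemma tr_diagm: "tr (diagm n d) = (\<Sum>i<n. d i)"
  unfolding tr_def diagm_def by simp

context
  fixes n P r A
  assumes P: "unitary n P" and Aeq: "A = P * diagm n (\<lambda>i. complex_of_real (r i)) * adj P"
begin

lemma sd_schatten: "schatten1 A = (\<Sum>i<n. \<bar>r i\<bar>)"
proof -
  define D where "D = diagm n (\<lambda>i. complex_of_real (r i))"
  have cP: "P \<in> carrier_mat n n" using P unitaryD by auto
  have D: "D \<in> carrier_mat n n" unfolding D_def by simp
  have adjA: "adj A = A"
  proof -
    have "adj (P * D * adj P) = adj (adj P) * adj (P * D)" by (rule adj_mult[of _ n n _ n]) (insert cP D, auto)
    also have "adj (P * D) = adj D * adj P" by (rule adj_mult[OF cP D])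
    also have "adj D = D" unfolding D_def adj_diagm by simp
    finally show ?thesis unfolding Aeq D_def[symmetric] using assoc_mult_mat[of P n n D n "adj P" n] cP D by simp
  qed
  have AA: "adj A * A = P * (D * D) * adj P" unfolding adjA unfolding Aeq D_def[symmetric]
    by (rule conj_prod[OF P D D])
  have DD: "D * D = diagm n (\<lambda>i. complex_of_real (r i ^ 2))"
    unfolding D_def diagm_mult by (simp add: power2_eq_square)
  have sim: "similar_mat (adj A * A) (D * D)"
    by (rule similar_matI[where n = n and P = P and Q = "adj P"]) (insert cP D AA unitary_right[OF P] unitaryD[OF P], auto)
  have cp: "char_poly (adj A * A) = (\<Prod>a\<leftarrow>map (\<lambda>i. complex_of_real (r i ^ 2)) [0..<n]. [:- a, 1:])"
    unfolding char_poly_similar[OF sim] DD char_poly_diagm ..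
  have "schatten1 A = sum_list (map (\<lambda>\<mu>. sqrt (Re \<mu>)) (map (\<lambda>i. complex_of_real (r i ^ 2)) [0..<n]))"
    unfolding schatten1_def Let_def cp by (rule roots_sum)
  also have "\<dots> = (\<Sum>i<n. \<bar>r i\<bar>)"
    by (simp add: sum_list_map_eq_sum_count o_def atLeast0LessThan[symmetric] sum_set_upt_conv_sum_list_nat[symmetric])
  finally show ?thesis .
qed

lemma sd_bound: assumes W: "unitary n W" shows "Re (tr (W * A)) \<le> (\<Sum>i<n. \<bar>r i\<bar>)"
proof -
  define D where "D = diagm n (\<lambda>i. complex_of_real (r i))"
  have cP: "P \<in> carrier_mat n n" using P unitaryD by auto
  have cW: "W \<in> carrier_mat n n" using W unitaryD by auto
  have D: "D \<in> carrier_mat n n" unfolding D_def by simp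
  define V where "V = adj P * W * P"
  have V: "unitary n V" unfolding V_def by (intro unitary_mult unitary_adj P W)
  have cV: "V \<in> carrier_mat n n" using V unitaryD by auto
  have "tr (W * A) = tr ((W * P * D) * adj P)"
    unfolding Aeq D_def[symmetric] using cP cW D by (simp add: assoc_mult_mat[of _ n n _ n _ n])
  also have "\<dots> = tr (adj P * (W * P * D))" by (rule tr_mult_comm[of _ n n]) (insert cP cW D, auto)
  also have "\<dots> = tr (V * D)" unfolding V_def using cP cW D by (simp add: assoc_mult_mat[of _ n n _ n _ n])
  also have "\<dots> = (\<Sum>i<n. V $$ (i,i) * complex_of_real (r i))" unfolding D_def by (rule tr_mult_diagm[OF cV])
  finally have "Re (tr (W * A)) = (\<Sum>i<n. Re (V $$ (i,i)) * r i)" by simp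
  also have "\<dots> \<le> (\<Sum>i<n. \<bar>r i\<bar>)"
  proof (rule sum_mono)
    fix i assume "i \<in> {..<n}"
    hence "cmod (V $$ (i,i)) \<le> 1" using unitary_diag_bound[OF V] by auto
    hence "\<bar>Re (V $$ (i,i))\<bar> \<le> 1" using abs_Re_le_cmod order_trans by blast
    hence "\<bar>Re (V $$ (i,i)) * r i\<bar> \<le> \<bar>r i\<bar>" by (simp add: abs_mult mult_left_le_one_le)
    thus "Re (V $$ (i,i)) * r i \<le> \<bar>r i\<bar>" by linarith
  qed
  finally show ?thesis .
qed

lemma sd_attain: "\<exists>S. unitary n S \<and> Re (tr (S * A)) = (\<Sum>i<n. \<bar>r i\<bar>)"
proof -
  define D where "D = diagm n (\<lambda>i. complex_of_real (r i))"
  define G where "G = diagm n (\<lambda>i. if r i \<ge> 0 then 1 else -1)"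
  have cP: "P \<in> carrier_mat n n" using P unitaryD by auto
  have D: "D \<in> carrier_mat n n" unfolding D_def by simp
  have G: "G \<in> carrier_mat n n" unfolding G_def by simp
  have uG: "unitary n G" unfolding G_def by (rule unitary_diagm) auto
  define S where "S = P * G * adj P"
  have uS: "unitary n S" unfolding S_def by (intro unitary_mult unitary_adj P uG)
  have "tr (S * A) = tr (P * (G * D) * adj P)" unfolding S_def Aeq D_def[symmetric]
    by (subst conj_prod[OF P G D]) simp
  also have "\<dots> = tr (G * D)" by (rule tr_conj[OF P]) (insert G D, auto)
  also have "G * D = diagm n (\<lambda>i. complex_of_real \<bar>r i\<bar>)"
    unfolding G_def D_def diagm_mult by (rule arg_cong[where f = "diagm n"]) auto
  finally have "tr (S * A) = (\<Sum>i<n. complex_of_real \<bar>r i\<bar>)" unfolding tr_diagm .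
  thus ?thesis using uS by (intro exI[of _ S]) simp
qed

end

theorem herm_schatten: assumes "A \<in> carrier_mat n n" "adj A = A"
  shows "(\<forall>W. unitary n W \<longrightarrow> Re (tr (W * A)) \<le> schatten1 A) \<and> (\<exists>S. unitary n S \<and> Re (tr (S * A)) = schatten1 A)"
proof -
  obtain P r where P: "unitary n P" and Aeq: "A = P * diagm n (\<lambda>i. complex_of_real (r i)) * adj P"
    using spectral[OF assms] by auto
  show ?thesis using sd_schatten[OF P Aeq] sd_bound[OF P Aeq] sd_attain[OF P Aeq] by auto
qed


lemma adj_minus: assumes "A \<in> carrier_mat n m" "B \<in> carrier_mat n m"
  shows "adj (A - B) = adj A - adj B"
  using assms by (auto intro!: eq_matI)

lemma schatten1_swap: assumes A: "A \<in> carrier_mat n n" and B: "B \<in> carrier_mat n n"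
  shows "schatten1 (A - B) = schatten1 (B - A)"
proof -
  have "adj (A - B) * (A - B) = adj (B - A) * (B - A)"
  proof (rule eq_matI)
    fix i j assume "i < dim_row (adj (B - A) * (B - A))" "j < dim_col (adj (B - A) * (B - A))"
    hence i: "i < n" and j: "j < n" using A B by auto
    show "(adj (A - B) * (A - B)) $$ (i, j) = (adj (B - A) * (B - A)) $$ (i, j)"
      using A B i j by (auto intro!: sum.cong simp: algebra_simps)
  qed (insert A B, auto)
  thus ?thesis unfolding schatten1_def by simp
qed

lemma herm_minus: assumes "A \<in> carrier_mat n n" "B \<in> carrier_mat n n" "adj A = A" "adj B = B"
  shows "adj (A - B) = A - B"
  using adj_minus[OF assms(1,2)] assms(3,4) by simp

lemma tr_mult_minus: assumes "W \<in> carrier_mat n n" "A \<in> carrier_mat n n" "B \<in> carrier_mat n n"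
  shows "Re (tr (W * (A - B))) = Re (tr (W * A)) - Re (tr (W * B))"
  using tr_minus[OF assms] by simp

theorem schatten_triangle3:
  assumes c: "A \<in> carrier_mat n n" "B \<in> carrier_mat n n" "C \<in> carrier_mat n n" "E \<in> carrier_mat n n"
    and h: "adj A = A" "adj B = B" "adj C = C" "adj E = E"
  shows "schatten1 (A - B) \<le> schatten1 (A - C) + schatten1 (C - E) + schatten1 (B - E)"
proof -
  have cAB: "A - B \<in> carrier_mat n n" using c by auto
  obtain S where S: "unitary n S" and eq: "Re (tr (S * (A - B))) = schatten1 (A - B)"
    using herm_schatten[OF cAB herm_minus[OF c(1,2) h(1,2)]] by auto
  have cS: "S \<in> carrier_mat n n" using S unitaryD by auto
  have b1: "Re (tr (S * (A - C))) \<le> schatten1 (A - C)"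
    using herm_schatten[OF minus_carrier_mat[OF c(3)] herm_minus[OF c(1,3) h(1,3)]] S by auto
  have b2: "Re (tr (S * (C - E))) \<le> schatten1 (C - E)"
    using herm_schatten[OF minus_carrier_mat[OF c(4)] herm_minus[OF c(3,4) h(3,4)]] S by auto
  have b3: "Re (tr (S * (E - B))) \<le> schatten1 (E - B)"
    using herm_schatten[OF minus_carrier_mat[OF c(2)] herm_minus[OF c(4,2) h(4,2)]] S by auto
  have sw: "schatten1 (E - B) = schatten1 (B - E)" by (rule schatten1_swap[OF c(4,2)])
  show ?thesis using b1 b2 b3 sw eq
    unfolding tr_mult_minus[OF cS c(1,2)] tr_mult_minus[OF cS c(1,3)] tr_mult_minus[OF cS c(3,4)]
      tr_mult_minus[OF cS c(4,2)] by linarith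
qed

subsection \<open>Tensor-like products\<close>

definition tens :: "nat \<Rightarrow> complex mat \<Rightarrow> complex mat \<Rightarrow> complex mat" where
  "tens N R S = mat (dim_row R * N) (dim_col R * N) (\<lambda>(a,b). R $$ (a div N, b div N) * S $$ (a mod N, b mod N))"

lemma tens_carrier[simp]: "R \<in> carrier_mat n1 m1 \<Longrightarrow> tens N R S \<in> carrier_mat (n1 * N) (m1 * N)"
  unfolding tens_def by auto

lemma tens_dim[simp]: "dim_row (tens N R S) = dim_row R * N" "dim_col (tens N R S) = dim_col R * N"
  unfolding tens_def by auto

lemma tens_index: "a < dim_row R * N \<Longrightarrow> b < dim_col R * N \<Longrightarrow>
  tens N R S $$ (a,b) = R $$ (a div N, b div N) * S $$ (a mod N, b mod N)"
  unfolding tens_def by auto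

lemma sum_split_prod: fixes k N :: nat shows "(\<Sum>l<k * N. f l) = (\<Sum>l1<k. \<Sum>l2<N. f (l1 * N + l2)) "
proof (induction k)
  case 0 thus ?case by simp
next
  case (Suc k)
  have e1: "(\<Sum>l<Suc k * N. f l) = (\<Sum>l<k * N. f l) + (\<Sum>l\<in>{k * N..<k * N + N}. f l)"
    by (simp add: add.commute sum.atLeastLessThan_concat[symmetric] lessThan_atLeast0 ac_simps)
  have e2: "(\<Sum>l\<in>{k * N..<k * N + N}. f l) = (\<Sum>l2<N. f (k * N + l2))"
  proof -
    have "(\<Sum>l\<in>{0 + k * N..<N + k * N}. f l) = (\<Sum>i\<in>{0..<N}. f (i + k * N))"
      by (rule sum.shift_bounds_nat_ivl)
    thus ?thesis by (simp add: add.commute lessThan_atLeast0)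
  qed
  show ?case unfolding e1 e2 Suc by simp
qed

lemma div_mod_pair: fixes l1 l2 N :: nat shows "l1 < k \<Longrightarrow> l2 < N \<Longrightarrow> (l1 * N + l2) div N = l1 \<and> (l1 * N + l2) mod N = l2"
proof -
  assume l2: "l2 < N"
  hence "N \<noteq> 0" by auto
  thus ?thesis using l2 by (simp add: add.commute[of "l1 * N" l2])
qed

lemma tens_mult: assumes A: "A \<in> carrier_mat n k" and C: "C \<in> carrier_mat k m"
  and B: "B \<in> carrier_mat N N" and D: "D \<in> carrier_mat N N"
  shows "tens N A B * tens N C D = tens N (A * C) (B * D)"
proof (rule eq_matI)
  fix a b assume "a < dim_row (tens N (A * C) (B * D))" "b < dim_col (tens N (A * C) (B * D))"
  hence a: "a < n * N" and b: "b < m * N" using A C by auto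
  have N: "N > 0" using a by (cases N) auto
  have ad: "a div N < n" using a by (simp add: less_mult_imp_div_less)
  have bd: "b div N < m" using b by (simp add: less_mult_imp_div_less)
  have am: "a mod N < N" "b mod N < N" using N by auto
  have "(tens N A B * tens N C D) $$ (a,b) = (\<Sum>l<k * N. tens N A B $$ (a,l) * tens N C D $$ (l,b))"
    using a b A C by auto
  also have "\<dots> = (\<Sum>l1<k. \<Sum>l2<N. tens N A B $$ (a,l1 * N + l2) * tens N C D $$ (l1 * N + l2,b))"
    by (rule sum_split_prod)
  also have "\<dots> = (\<Sum>l1<k. \<Sum>l2<N. (A $$ (a div N, l1) * C $$ (l1, b div N)) * (B $$ (a mod N, l2) * D $$ (l2, b mod N)))"
  proof (intro sum.cong refl)
    fix l1 l2 assume l1: "l1 \<in> {..<k}" and l2: "l2 \<in> {..<N}"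
    have lt: "l1 * N + l2 < k * N" using l1 l2
      by (metis lessThan_iff add.commute add_less_cancel_left less_imp_le_nat mult.commute mult_Suc_right
          mult_le_mono2 not_less_eq_eq order_less_le_trans Suc_leI)
    show "tens N A B $$ (a,l1 * N + l2) * tens N C D $$ (l1 * N + l2,b) =
      (A $$ (a div N, l1) * C $$ (l1, b div N)) * (B $$ (a mod N, l2) * D $$ (l2, b mod N))"
      using lt a b A C l1 l2 div_mod_pair[of l1 k l2 N] by (auto simp: tens_index)
  qed
  also have "\<dots> = (\<Sum>l1<k. A $$ (a div N, l1) * C $$ (l1, b div N)) * (\<Sum>l2<N. B $$ (a mod N, l2) * D $$ (l2, b mod N))"
    by (simp add: sum_product mult_ac)
  also have "\<dots> = tens N (A * C) (B * D) $$ (a,b)"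
    using a b A B C D ad bd am by (auto simp: tens_index)
  finally show "(tens N A B * tens N C D) $$ (a,b) = tens N (A * C) (B * D) $$ (a,b)" .
qed (insert A C, auto)

lemma adj_tens: assumes "A \<in> carrier_mat n m" "B \<in> carrier_mat N N"
  shows "adj (tens N A B) = tens N (adj A) (adj B)"
proof (rule eq_matI)
  fix a b assume "a < dim_row (tens N (adj A) (adj B))" "b < dim_col (tens N (adj A) (adj B))"
  hence a: "a < m * N" and b: "b < n * N" using assms by auto
  have N: "N > 0" using a by (cases N) auto
  have "a div N < m" "b div N < n" using a b by (auto simp: less_mult_imp_div_less)
  thus "adj (tens N A B) $$ (a,b) = tens N (adj A) (adj B) $$ (a,b)"
    using a b assms N by (auto simp: tens_index)
qed (insert assms, auto)

lemma tens_one: "tens N (1\<^sub>m n) (1\<^sub>m N) = 1\<^sub>m (n * N)"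
proof (rule eq_matI)
  fix a b assume "a < dim_row (1\<^sub>m (n * N))" "b < dim_col (1\<^sub>m (n * N))"
  hence a: "a < n * N" and b: "b < n * N" by auto
  have N: "N > 0" using a by (cases N) auto
  have "a div N < n" "b div N < n" using a b by (auto simp: less_mult_imp_div_less)
  moreover have "(a = b) = (a div N = b div N \<and> a mod N = b mod N)"
    by (metis div_mult_mod_eq)
  ultimately show "tens N (1\<^sub>m n) (1\<^sub>m N) $$ (a,b) = 1\<^sub>m (n * N) $$ (a,b)"
    using a b N by (auto simp: tens_index)
qed auto

lemma unitary_tens: assumes "unitary n U" "unitary N V" shows "unitary (n * N) (tens N U V)"
proof -
  have U: "U \<in> carrier_mat n n" and V: "V \<in> carrier_mat N N" using assms unitaryD by auto
  show ?thesis unfolding unitary_def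
    using adj_tens[OF U V] tens_mult[OF adj_carrier[OF U] U adj_carrier[OF V] V] assms U V tens_one
    unfolding unitary_def by auto
qed

lemma tr_tens: assumes "A \<in> carrier_mat n n" "B \<in> carrier_mat N N"
  shows "tr (tens N A B) = tr A * tr B"
proof -
  have "tr (tens N A B) = (\<Sum>l<n * N. tens N A B $$ (l,l))" unfolding tr_def using assms by simp
  also have "\<dots> = (\<Sum>l1<n. \<Sum>l2<N. tens N A B $$ (l1 * N + l2, l1 * N + l2))" by (rule sum_split_prod)
  also have "\<dots> = (\<Sum>l1<n. \<Sum>l2<N. A $$ (l1, l1) * B $$ (l2, l2))"
  proof (intro sum.cong refl)
    fix l1 l2 assume l1: "l1 \<in> {..<n}" and l2: "l2 \<in> {..<N}"
    have lt: "l1 * N + l2 < n * N" using l1 l2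
      by (metis lessThan_iff add.commute add_less_cancel_left less_imp_le_nat mult.commute mult_Suc_right
          mult_le_mono2 not_less_eq_eq order_less_le_trans Suc_leI)
    show "tens N A B $$ (l1 * N + l2, l1 * N + l2) = A $$ (l1, l1) * B $$ (l2, l2)"
      using lt assms l1 l2 div_mod_pair[of l1 n l2 N] by (auto simp: tens_index)
  qed
  also have "\<dots> = tr A * tr B" unfolding tr_def using assms by (simp add: sum_product)
  finally show ?thesis .
qed

lemma tens_minus: assumes "A \<in> carrier_mat n n" "C \<in> carrier_mat n n" "B \<in> carrier_mat N N" "D \<in> carrier_mat N N"
  shows "tens N A B - tens N C D \<in> carrier_mat (n * N) (n * N)"
  using assms by auto

theorem tens_lower:
  assumes R1: "R1 \<in> carrier_mat n n" and R2: "R2 \<in> carrier_mat n n"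
    and S1: "S1 \<in> carrier_mat N N" and S2: "S2 \<in> carrier_mat N N"
    and h: "adj R1 = R1" "adj R2 = R2" "adj S1 = S1" "adj S2 = S2"
  shows "tr S1 = 1 \<Longrightarrow> tr S2 = 1 \<Longrightarrow> schatten1 (R1 - R2) \<le> schatten1 (tens N R1 S1 - tens N R2 S2)"
    and "tr R1 = 1 \<Longrightarrow> tr R2 = 1 \<Longrightarrow> schatten1 (S1 - S2) \<le> schatten1 (tens N R1 S1 - tens N R2 S2)"
proof -
  let ?T = "tens N R1 S1 - tens N R2 S2"
  have cT: "?T \<in> carrier_mat (n * N) (n * N)" using R1 S1 R2 S2 by auto
  have hT: "adj ?T = ?T"
    by (rule herm_minus[of _ "n * N"]) (insert R1 R2 S1 S2 h, auto simp: adj_tens)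
  note HT = herm_schatten[OF cT hT]
  have key: "Re (tr (tens N X Y * ?T)) = Re (tr (X * R1) * tr (Y * S1) - tr (X * R2) * tr (Y * S2))"
    if X: "X \<in> carrier_mat n n" and Y: "Y \<in> carrier_mat N N" for X Y
  proof -
    have "tr (tens N X Y * ?T) = tr (tens N X Y * tens N R1 S1) - tr (tens N X Y * tens N R2 S2)"
      by (rule tr_minus[of _ "n * N"]) (insert X Y R1 R2 S1 S2, auto)
    also have "\<dots> = tr (X * R1) * tr (Y * S1) - tr (X * R2) * tr (Y * S2)"
      using X Y R1 R2 S1 S2 by (simp add: tens_mult[of _ n n _ n] tr_tens[of _ n _ N])
    finally show ?thesis by simp
  qed
  show "tr S1 = 1 \<Longrightarrow> tr S2 = 1 \<Longrightarrow> schatten1 (R1 - R2) \<le> schatten1 ?T"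
  proof -
    assume t: "tr S1 = 1" "tr S2 = 1"
    have cR: "R1 - R2 \<in> carrier_mat n n" using R1 R2 by auto
    obtain S where S: "unitary n S" and eq: "Re (tr (S * (R1 - R2))) = schatten1 (R1 - R2)"
      using herm_schatten[OF cR herm_minus[OF R1 R2 h(1,2)]] by auto
    have cS: "S \<in> carrier_mat n n" using S unitaryD by auto
    have W: "unitary (n * N) (tens N S (1\<^sub>m N))" by (rule unitary_tens[OF S unitary_one])
    have "Re (tr (tens N S (1\<^sub>m N) * ?T)) = schatten1 (R1 - R2)"
      unfolding key[OF cS one_carrier_mat] eq[symmetric] tr_minus[OF cS R1 R2] using t S1 S2 by simp
    thus ?thesis using HT W by auto
  qed
  show "tr R1 = 1 \<Longrightarrow> tr R2 = 1 \<Longrightarrow> schatten1 (S1 - S2) \<le> schatten1 ?T"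
  proof -
    assume t: "tr R1 = 1" "tr R2 = 1"
    have cR: "S1 - S2 \<in> carrier_mat N N" using S1 S2 by auto
    obtain S where S: "unitary N S" and eq: "Re (tr (S * (S1 - S2))) = schatten1 (S1 - S2)"
      using herm_schatten[OF cR herm_minus[OF S1 S2 h(3,4)]] by auto
    have cS: "S \<in> carrier_mat N N" using S unitaryD by auto
    have W: "unitary (n * N) (tens N (1\<^sub>m n) S)" by (rule unitary_tens[OF unitary_one S])
    have "Re (tr (tens N (1\<^sub>m n) S * ?T)) = schatten1 (S1 - S2)"
      unfolding key[OF one_carrier_mat cS] eq[symmetric] tr_minus[OF cS S1 S2] using t R1 R2 by simp
    thus ?thesis using HT W by auto
  qed
qed


lemma qbit_bit: "qbit s j = bit s j"
  unfolding qbit_def bit_nat_def ..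

definition bitsum :: "nat set \<Rightarrow> nat" where
  "bitsum P = (\<Sum>p\<in>P. 2 ^ p)"

lemma bit_bitsum: assumes "finite P" shows "bit (bitsum P) p \<longleftrightarrow> p \<in> P"
  using assms
proof (induction P arbitrary: p rule: finite_induct)
  case empty thus ?case by (simp add: bitsum_def)
next
  case (insert x F)
  have "bitsum (insert x F) = 2 ^ x + bitsum F" using insert by (simp add: bitsum_def)
  moreover have "bit ((2::nat) ^ x + bitsum F) p \<longleftrightarrow> bit ((2::nat) ^ x) p \<or> bit (bitsum F) p"
    by (rule bit_disjunctive_add_iff) (use insert in \<open>auto simp: bit_exp_iff\<close>)
  ultimately show ?case using insert by (auto simp: bit_exp_iff)
qed

lemma sum_pow2_lt: "(\<Sum>p<m. (2::nat) ^ p) < 2 ^ m"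
  by (induction m) auto

lemma bitsum_lt: assumes "P \<subseteq> {..<m}" shows "bitsum P < 2 ^ m"
proof -
  have "bitsum P \<le> (\<Sum>p<m. 2 ^ p)" unfolding bitsum_def
    by (rule sum_mono2) (use assms in auto)
  thus ?thesis using sum_pow2_lt[of m] by linarith
qed

lemma bit_lt: fixes s :: nat assumes "s < 2 ^ m" "bit s p" shows "p < m"
proof -
  have "take_bit m s = s" using assms(1) by (simp add: take_bit_nat_eq_self_iff)
  hence "bit (take_bit m s) p" using assms(2) by simp
  thus ?thesis by (simp add: bit_take_bit_iff)
qed

lemma bitsum_bits: fixes s :: nat assumes "s < 2 ^ m" shows "bitsum {p. p < m \<and> bit s p} = s"
proof (rule bit_eqI)
  fix p
  have "bit (bitsum {p. p < m \<and> bit s p}) p \<longleftrightarrow> p < m \<and> bit s p" by (subst bit_bitsum) auto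
  thus "bit (bitsum {p. p < m \<and> bit s p}) p \<longleftrightarrow> bit s p" using bit_lt[OF assms] by auto
qed

lemma bits_eq_lt: fixes a b :: nat assumes "a < 2 ^ k" "b < 2 ^ k" "\<And>j. j < k \<Longrightarrow> bit a j = bit b j"
  shows "a = b"
proof (rule bit_eqI)
  fix p show "bit a p \<longleftrightarrow> bit b p" using assms bit_lt[OF assms(1)] bit_lt[OF assms(2)] by (cases "p < k") auto
qed

lemma embed_bitsum: assumes "distinct K"
  shows "embed K a = bitsum ((!) K ` {j. j < length K \<and> bit a j})"
proof -
  have inj: "inj_on ((!) K) {j. j < length K \<and> bit a j}"
    using assms by (auto simp: inj_on_def nth_eq_iff_index_eq)
  have "embed K a = (\<Sum>j\<in>{j. j < length K \<and> bit a j}. 2 ^ (K ! j))"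
    unfolding embed_def qbit_bit by (simp add: sum.inter_filter[symmetric] lessThan_def Collect_conj_eq)
  also have "\<dots> = bitsum ((!) K ` {j. j < length K \<and> bit a j})"
    unfolding bitsum_def by (rule sum.reindex[OF inj, symmetric, unfolded o_def])
  finally show ?thesis .
qed

context
  fixes K L :: "nat list" and m :: nat
  assumes dK: "distinct K" and dL: "distinct L" and disj: "set K \<inter> set L = {}"
    and un: "set K \<union> set L = {..<m}"
begin

lemma KL_len: "length K + length L = m"
proof -
  have "card (set K \<union> set L) = length K + length L"
    using disj dK dL by (simp add: card_Un_disjoint distinct_card)
  thus ?thesis using un by simp
qed

private definition "EK a = (!) K ` {j. j < length K \<and> bit a j}"
private definition "EL t = (!) L ` {j. j < length L \<and> bit t j}"

private lemma h_eq: "embed K a + embed L t = bitsum (EK a \<union> EL t)"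
proof -
  have "EK a \<subseteq> set K" "EL t \<subseteq> set L" unfolding EK_def EL_def by auto
  hence "EK a \<inter> EL t = {}" using disj by auto
  moreover have "finite (EK a)" "finite (EL t)" unfolding EK_def EL_def by auto
  ultimately show ?thesis unfolding embed_bitsum[OF dK] embed_bitsum[OF dL] EK_def[symmetric] EL_def[symmetric]
    bitsum_def by (simp add: sum.union_disjoint)
qed

private lemma h_bitK: "j < length K \<Longrightarrow> bit (embed K a + embed L t) (K ! j) \<longleftrightarrow> bit a j"
proof -
  assume j: "j < length K"
  have fin: "finite (EK a \<union> EL t)" unfolding EK_def EL_def by auto
  have "K ! j \<in> set K" using j by simp
  hence "K ! j \<notin> set L" using disj by blast
  hence "K ! j \<notin> EL t" unfolding EL_def by auto
  moreover have "K ! j \<in> EK a \<longleftrightarrow> bit a j" unfolding EK_def using j dK by (auto simp: nth_eq_iff_index_eq)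
  ultimately show ?thesis unfolding h_eq bit_bitsum[OF fin] by auto
qed

private lemma h_bitL: "j < length L \<Longrightarrow> bit (embed K a + embed L t) (L ! j) \<longleftrightarrow> bit t j"
proof -
  assume j: "j < length L"
  have fin: "finite (EK a \<union> EL t)" unfolding EK_def EL_def by auto
  have "L ! j \<in> set L" using j by simp
  hence "L ! j \<notin> set K" using disj by blast
  hence "L ! j \<notin> EK a" unfolding EK_def by auto
  moreover have "L ! j \<in> EL t \<longleftrightarrow> bit t j" unfolding EL_def using j dL by (auto simp: nth_eq_iff_index_eq)
  ultimately show ?thesis unfolding h_eq bit_bitsum[OF fin] by auto
qed

lemma embed_lt: "embed K a + embed L t < 2 ^ m"
proof -
  have "EK a \<subseteq> set K" "EL t \<subseteq> set L" unfolding EK_def EL_def by auto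
  hence "EK a \<union> EL t \<subseteq> {..<m}" using un by blast
  thus ?thesis unfolding h_eq by (rule bitsum_lt)
qed

lemma embed_bij: "bij_betw (\<lambda>(a,t). embed K a + embed L t) ({..<2 ^ length K} \<times> {..<2 ^ length L}) {..<2 ^ m}"
proof -
  let ?h = "\<lambda>(a,t). embed K a + embed L t"
  let ?A = "{..<(2::nat) ^ length K} \<times> {..<(2::nat) ^ length L}"
  have inj: "inj_on ?h ?A"
  proof (rule inj_onI, clarify)
    fix a t a' t'
    assume a: "a < 2 ^ length K" and t: "t < 2 ^ length L" and a': "a' < 2 ^ length K" and t': "t' < 2 ^ length L"
      and eq: "embed K a + embed L t = embed K a' + embed L t'"
    show "a = a' \<and> t = t'"
    proof
      show "a = a'"
      proof (rule bits_eq_lt[OF a a'])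
        fix j assume j: "j < length K"
        show "bit a j = bit a' j" using h_bitK[OF j, of a t] h_bitK[OF j, of a' t'] unfolding eq by blast
      qed
      show "t = t'"
      proof (rule bits_eq_lt[OF t t'])
        fix j assume j: "j < length L"
        show "bit t j = bit t' j" using h_bitL[OF j, of a t] h_bitL[OF j, of a' t'] unfolding eq by blast
      qed
    qed
  qed
  have sub: "?h ` ?A \<subseteq> {..<2 ^ m}" by (clarsimp simp: embed_lt)
  have "card (?h ` ?A) = card ?A" by (rule card_image[OF inj])
  also have "\<dots> = 2 ^ m" using KL_len by (simp add: power_add[symmetric])
  finally have "?h ` ?A = {..<2 ^ m}" using sub by (intro card_subset_eq) auto
  thus ?thesis using inj unfolding bij_betw_def by auto
qed

lemma embed_sum: "(\<Sum>a<2 ^ length K. \<Sum>t<2 ^ length L. f (embed K a + embed L t)) = (\<Sum>s<2 ^ m. f s)"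
proof -
  have "(\<Sum>a<2 ^ length K. \<Sum>t<2 ^ length L. f (embed K a + embed L t))
      = (\<Sum>(a,t)\<in>{..<2 ^ length K} \<times> {..<2 ^ length L}. f (embed K a + embed L t))"
    by (rule sum.cartesian_product)
  also have "\<dots> = (\<Sum>s<2 ^ m. f s)"
  proof -
    have "(\<Sum>(a,t)\<in>{..<2 ^ length K} \<times> {..<2 ^ length L}. f (embed K a + embed L t))
       = (\<Sum>x\<in>{..<2 ^ length K} \<times> {..<2 ^ length L}. f ((\<lambda>(a,t). embed K a + embed L t) x))"
      by (rule sum.cong) auto
    also have "\<dots> = (\<Sum>s<2 ^ m. f s)" by (rule sum.reindex_bij_betw[OF embed_bij])
    finally show ?thesis .
  qed
  finally show ?thesis .
qed

end

lemma pt_lists: fixes m :: nat and S :: "nat set" assumes "S \<subseteq> {0..<m}"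
  defines "K \<equiv> sorted_list_of_set ({0..<m} - S)" and "L \<equiv> sorted_list_of_set S"
  shows "distinct K" "distinct L" "set K \<inter> set L = {}" "set K \<union> set L = {..<m}"
proof -
  have fS: "finite S" using finite_subset[OF assms(1)] by simp
  show "distinct K" "distinct L" unfolding K_def L_def by auto
  have sK: "set K = {0..<m} - S" unfolding K_def by simp
  have sL: "set L = S" unfolding L_def using fS by simp
  show "set K \<inter> set L = {}" unfolding sK sL by blast
  have "({0..<m} - S) \<union> S = {0..<m}" using assms(1) by blast
  thus "set K \<union> set L = {..<m}" unfolding sK sL by (simp add: atLeast0LessThan)
qed


subsection \<open>Permutation matrices\<close>

definition pm :: "nat \<Rightarrow> (nat \<Rightarrow> nat) \<Rightarrow> complex mat" where
  "pm M g = mat M M (\<lambda>(r,c). if c = g r then 1 else 0)"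

lemma pm_carrier[simp]: "pm M g \<in> carrier_mat M M" unfolding pm_def by auto
lemma pm_dim[simp]: "dim_row (pm M g) = M" "dim_col (pm M g) = M" unfolding pm_def by auto

lemma pm_apply: assumes "dim_vec v = M" "r < M" "g r < M"
  shows "(pm M g *\<^sub>v v) $ r = v $ (g r)"
proof -
  have "(pm M g *\<^sub>v v) $ r = (\<Sum>c<M. (if c = g r then 1 else 0) * v $ c)"
    using assms unfolding pm_def by (simp add: index_mult_mat_vec scalar_prod_def atLeast0LessThan)
  also have "\<dots> = (\<Sum>c<M. if c = g r then v $ (g r) else 0)" by (rule sum.cong) auto
  also have "\<dots> = v $ (g r)" using assms by simp
  finally show ?thesis .
qed

lemma unitary_pm: assumes bij: "bij_betw g {..<M} {..<M}" shows "unitary M (pm M g)"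
proof -
  have "adj (pm M g) * pm M g = 1\<^sub>m M"
  proof (rule eq_matI)
    fix i j assume "i < dim_row (1\<^sub>m M)" "j < dim_col (1\<^sub>m M)"
    hence i: "i < M" and j: "j < M" by auto
    have "(adj (pm M g) * pm M g) $$ (i,j) = (\<Sum>r<M. (\<lambda>s. if i = s \<and> j = s then 1 else 0) (g r))"
      using i j unfolding pm_def by (auto intro!: sum.cong)
    also have "\<dots> = (\<Sum>s<M. if i = s \<and> j = s then 1 else 0)" by (rule sum.reindex_bij_betw[OF bij])
    also have "\<dots> = 1\<^sub>m M $$ (i,j)" using i j by (cases "i = j") auto
    finally show "(adj (pm M g) * pm M g) $$ (i,j) = 1\<^sub>m M $$ (i,j)" .
  qed auto
  thus ?thesis unfolding unitary_def by auto
qed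

subsection \<open>The query permutation\<close>

lemma bit_lt_pow: fixes x :: nat assumes "\<And>p. bit x p \<Longrightarrow> p < m" shows "x < 2 ^ m"
proof -
  have "take_bit m x = x" by (rule bit_eqI) (use assms in \<open>auto simp: bit_take_bit_iff\<close>)
  moreover have "take_bit m x < 2 ^ m" by (simp add: take_bit_nat_less_exp)
  ultimately show ?thesis by simp
qed

lemma bit_set_ge: fixes s :: nat assumes "bit s q" shows "s \<ge> 2 ^ q"
proof (rule ccontr)
  assume "\<not> s \<ge> 2 ^ q"
  hence "s < 2 ^ q" by simp
  thus False using bit_lt[OF _ assms] by blast
qed

lemma bit_plus_exp: fixes s :: nat assumes "\<not> bit s q"
  shows "bit (s + 2 ^ q) p \<longleftrightarrow> (bit s p \<or> p = q)"
proof -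
  have "bit (s + 2 ^ q) p \<longleftrightarrow> bit s p \<or> bit ((2::nat) ^ q) p"
    by (rule bit_disjunctive_add_iff) (use assms in \<open>auto simp: bit_exp_iff\<close>)
  thus ?thesis by (auto simp: bit_exp_iff)
qed

lemma bit_q_plus: fixes s :: nat shows "bit (s + 2 ^ q) q \<longleftrightarrow> \<not> bit s q"
  unfolding bit_nat_def by simp

lemma bit_q_minus: fixes s :: nat assumes "bit s q" shows "\<not> bit (s - 2 ^ q) q"
proof -
  define s' where "s' = s - 2 ^ q"
  have s: "s = s' + 2 ^ q" using bit_set_ge[OF assms] unfolding s'_def by simp
  show ?thesis using assms unfolding s'_def[symmetric] unfolding s bit_q_plus by simp
qed

lemma mod_plus_self: fixes s Q :: nat shows "(s + Q) mod Q = s mod Q" by simp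
lemma mod_minus_self: fixes s Q :: nat shows "Q \<le> s \<Longrightarrow> (s - Q) mod Q = s mod Q" by (simp add: le_mod_geq)

lemma qp_unfold: "query_perm n x s = (if s mod 2 ^ idx_qubits n < n \<and> x ! (s mod 2 ^ idx_qubits n)
   then (if bit s (idx_qubits n) then s - 2 ^ idx_qubits n else s + 2 ^ idx_qubits n) else s)"
  unfolding query_perm_def Let_def qbit_bit ..

lemma qp_invol: "query_perm n x (query_perm n x s) = s"
proof -
  define q where "q = idx_qubits n"
  define Q :: nat where "Q = 2 ^ q"
  define c where "c = (\<lambda>s. s mod Q < n \<and> x ! (s mod Q))"
  have qp: "\<And>s. query_perm n x s = (if c s then (if bit s q then s - Q else s + Q) else s)"
    unfolding qp_unfold c_def Q_def q_def ..
  show ?thesis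
  proof (cases "c s")
    case False thus ?thesis unfolding qp by simp
  next
    case True
    show ?thesis
    proof (cases "bit s q")
      case b: True
      have ge: "Q \<le> s" using bit_set_ge[OF b] unfolding Q_def .
      have "c (s - Q)" using True mod_minus_self[OF ge] unfolding c_def by simp
      moreover have "\<not> bit (s - Q) q" using bit_q_minus[OF b] unfolding Q_def .
      ultimately show ?thesis unfolding qp using True b ge by simp
    next
      case b: False
      have "c (s + Q)" using True unfolding c_def by simp
      moreover have "bit (s + Q) q" using b bit_q_plus unfolding Q_def by simp
      ultimately show ?thesis unfolding qp using True b by simp
    qed
  qed
qed

lemma qp_lt: assumes "idx_qubits n < m" "s < 2 ^ m" shows "query_perm n x s < 2 ^ m"
proof -
  define q where "q = idx_qubits n"
  have qm: "q < m" using assms unfolding q_def by simp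
  show ?thesis
  proof (cases "bit s q")
    case True
    have "query_perm n x s \<le> s" unfolding qp_unfold q_def[symmetric] using True by auto
    thus ?thesis using assms by simp
  next
    case False
    have "s + 2 ^ q < 2 ^ m"
    proof (rule bit_lt_pow)
      fix p assume "bit (s + 2 ^ q) p"
      hence "bit s p \<or> p = q" using bit_plus_exp[OF False] by simp
      thus "p < m" using bit_lt[OF assms(2)] qm by auto
    qed
    thus ?thesis unfolding qp_unfold q_def[symmetric] using False assms by auto
  qed
qed

lemma qp_bij: assumes "idx_qubits n < m" shows "bij_betw (query_perm n x) {..<2 ^ m} {..<2 ^ m}"
  by (rule bij_betw_byWitness[where f' = "query_perm n x"]) (auto simp: qp_invol qp_lt[OF assms])

lemma query_op_pm: assumes "idx_qubits n < m" shows "query_op n m x = pm (2 ^ m) (query_perm n x)"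
proof (rule eq_matI)
  fix r c assume "r < dim_row (pm (2 ^ m) (query_perm n x))" "c < dim_col (pm (2 ^ m) (query_perm n x))"
  hence r: "r < 2 ^ m" and c: "c < 2 ^ m" by auto
  have "(r = query_perm n x c) = (c = query_perm n x r)" using qp_invol[of n x] by metis
  thus "query_op n m x $$ (r,c) = pm (2 ^ m) (query_perm n x) $$ (r,c)"
    using r c unfolding query_op_def pm_def by simp
qed (auto simp: query_op_def)

lemma unitary_query: assumes "idx_qubits n < m" shows "unitary (2 ^ m) (query_op n m x)"
  unfolding query_op_pm[OF assms] by (rule unitary_pm[OF qp_bij[OF assms]])

lemma query_carrier[simp]: "query_op n m x \<in> carrier_mat (2 ^ m) (2 ^ m)"
  unfolding query_op_def by auto

lemma qp_prod: assumes q: "idx_qubits n < mL" and lo: "lo < 2 ^ mL"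
  shows "query_perm n x (hi * 2 ^ mL + lo) = hi * 2 ^ mL + query_perm n x lo"
proof -
  define q where "q = idx_qubits n"
  define Q :: nat where "Q = 2 ^ q"
  define c where "c = (\<lambda>s. s mod Q < n \<and> x ! (s mod Q))"
  have qp: "\<And>s. query_perm n x s = (if c s then (if bit s q then s - Q else s + Q) else s)"
    unfolding qp_unfold c_def Q_def q_def ..
  define e where "e = mL - q"
  have Le: "(2::nat) ^ mL = 2 ^ e * Q" unfolding e_def Q_def using q unfolding q_def[symmetric]
    by (simp add: power_add[symmetric])
  have e0: "e > 0" using q unfolding e_def q_def by simp
  have Q0: "Q > 0" unfolding Q_def by simp
  have hm: "(hi * 2 ^ mL + lo) mod Q = lo mod Q" unfolding Le mult.assoc[symmetric] by (rule mod_mult_self3)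
  have "(hi * 2 ^ mL + lo) div Q = hi * 2 ^ e + lo div Q" unfolding Le mult.assoc[symmetric] using Q0
    by simp
  moreover have "even (hi * (2::nat) ^ e)" using e0 by simp
  ultimately have hb: "bit (hi * 2 ^ mL + lo) q = bit lo q" unfolding bit_nat_def Q_def[symmetric] by simp
  have hc: "c (hi * 2 ^ mL + lo) = c lo" unfolding c_def hm ..
  show ?thesis
  proof (cases "c lo")
    case False thus ?thesis unfolding qp hc by simp
  next
    case True
    show ?thesis
    proof (cases "bit lo q")
      case b: True
      have "Q \<le> lo" using bit_set_ge[OF b] unfolding Q_def .
      thus ?thesis unfolding qp hc hb using True b by simp
    next
      case False
      thus ?thesis unfolding qp hc hb using True by simp
    qed
  qed
qed


definition vt :: "nat \<Rightarrow> complex vec \<Rightarrow> complex vec \<Rightarrow> complex vec" where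
  "vt N a b = vec (dim_vec a * N) (\<lambda>s. a $ (s div N) * b $ (s mod N))"

lemma vt_dim[simp]: "dim_vec (vt N a b) = dim_vec a * N" unfolding vt_def by simp

lemma vt_index: "s < dim_vec a * N \<Longrightarrow> vt N a b $ s = a $ (s div N) * b $ (s mod N)"
  unfolding vt_def by simp

lemma lt_mult_div: fixes s H N :: nat shows "s < H * N \<Longrightarrow> s div N < H"
  by (simp add: less_mult_imp_div_less)

lemma lt_mult_mod: fixes s H N :: nat shows "s < H * N \<Longrightarrow> s mod N < N"
  by (cases N) auto

lemma pair_lt: fixes l1 l2 k N :: nat shows "l1 < k \<Longrightarrow> l2 < N \<Longrightarrow> l1 * N + l2 < k * N"
proof -
  assume "l1 < k" "l2 < N"
  hence "l1 * N + l2 < l1 * N + N" by simp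
  also have "\<dots> = Suc l1 * N" by simp
  also have "\<dots> \<le> k * N" using \<open>l1 < k\<close> by (intro mult_right_mono) auto
  finally show ?thesis .
qed

lemma row_sprod: assumes "A \<in> carrier_mat r c" "a \<in> carrier_vec c" "i < r"
  shows "row A i \<bullet> a = (\<Sum>l<c. A $$ (i,l) * a $ l)"
  using assms by (auto simp: scalar_prod_def atLeast0LessThan intro!: sum.cong)

lemma vt_mult: assumes A: "A \<in> carrier_mat H H" and B: "B \<in> carrier_mat N N"
  and a: "a \<in> carrier_vec H" and b: "b \<in> carrier_vec N"
  shows "tens N A B *\<^sub>v vt N a b = vt N (A *\<^sub>v a) (B *\<^sub>v b)"
proof (rule eq_vecI)
  fix s assume "s < dim_vec (vt N (A *\<^sub>v a) (B *\<^sub>v b))"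
  hence s: "s < H * N" using A by simp
  have sd: "s div N < H" and sm: "s mod N < N" using s lt_mult_div lt_mult_mod by auto
  have da: "dim_vec a = H" using a by simp
  have "(tens N A B *\<^sub>v vt N a b) $ s = (\<Sum>l<H * N. tens N A B $$ (s,l) * vt N a b $ l)"
    using s A by (auto simp: index_mult_mat_vec scalar_prod_def atLeast0LessThan da intro!: sum.cong)
  also have "\<dots> = (\<Sum>l1<H. \<Sum>l2<N. tens N A B $$ (s,l1 * N + l2) * vt N a b $ (l1 * N + l2))"
    by (rule sum_split_prod)
  also have "\<dots> = (\<Sum>l1<H. \<Sum>l2<N. (A $$ (s div N, l1) * a $ l1) * (B $$ (s mod N, l2) * b $ l2))"
  proof (intro sum.cong refl)
    fix l1 l2 assume l1: "l1 \<in> {..<H}" and l2: "l2 \<in> {..<N}"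
    have lt: "l1 * N + l2 < H * N" using l1 l2 pair_lt by auto
    show "tens N A B $$ (s,l1 * N + l2) * vt N a b $ (l1 * N + l2) = (A $$ (s div N, l1) * a $ l1) * (B $$ (s mod N, l2) * b $ l2)"
      using lt s A a l1 l2 div_mod_pair[of l1 H l2 N] by (simp add: tens_index vt_index)
  qed
  also have "\<dots> = (\<Sum>l1<H. A $$ (s div N, l1) * a $ l1) * (\<Sum>l2<N. B $$ (s mod N, l2) * b $ l2)"
    by (simp add: sum_product)
  also have "\<dots> = vt N (A *\<^sub>v a) (B *\<^sub>v b) $ s"
    using s sd sm A B a b by (simp add: vt_index index_mult_mat_vec row_sprod[OF A a sd] row_sprod[OF B b sm])
  finally show "(tens N A B *\<^sub>v vt N a b) $ s = vt N (A *\<^sub>v a) (B *\<^sub>v b) $ s" .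
qed (use A a in simp)

lemma vt_carrier[simp]: "a \<in> carrier_vec H \<Longrightarrow> vt N a b \<in> carrier_vec (H * N)"
  unfolding carrier_vec_def by simp

lemma unit_vt: assumes "H > 0" "N > 0"
  shows "unit_vec (H * N) 0 = vt N (unit_vec H 0) (unit_vec N 0)"
proof (rule eq_vecI)
  fix s assume "s < dim_vec (vt N (unit_vec H 0) (unit_vec N 0))"
  hence s: "s < H * N" by simp
  have "(s = 0) = (s div N = 0 \<and> s mod N = 0)" by (metis div_mult_mod_eq add_0 mult_0 div_0 mod_0)
  thus "unit_vec (H * N) 0 $ s = vt N (unit_vec H 0) (unit_vec N 0) $ s"
    using s assms lt_mult_div[OF s] lt_mult_mod[OF s] by (auto simp: vt_index unit_vec_def)
qed simp

lemma query_vt: assumes q: "idx_qubits n < mL" and a: "a \<in> carrier_vec (2 ^ mH)" and b: "b \<in> carrier_vec (2 ^ mL)"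
  shows "query_op n (mH + mL) x *\<^sub>v vt (2 ^ mL) a b = vt (2 ^ mL) a (query_op n mL x *\<^sub>v b)"
proof (rule eq_vecI)
  have q2: "idx_qubits n < mH + mL" using q by simp
  fix s assume "s < dim_vec (vt (2 ^ mL) a (query_op n mL x *\<^sub>v b))"
  hence s: "s < 2 ^ mH * 2 ^ mL" using a by simp
  define hi where "hi = s div 2 ^ mL"
  define lo where "lo = s mod 2 ^ mL"
  have lo: "lo < 2 ^ mL" unfolding lo_def by simp
  have sd: "s = hi * 2 ^ mL + lo" unfolding hi_def lo_def by (rule div_mult_mod_eq[symmetric])
  have hi: "hi < 2 ^ mH" unfolding hi_def using lt_mult_div[OF s] .
  have s2: "s < 2 ^ (mH + mL)" using s by (simp add: power_add)
  have qpl: "query_perm n x lo < 2 ^ mL" by (rule qp_lt[OF q lo])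
  have qps: "query_perm n x s = hi * 2 ^ mL + query_perm n x lo" unfolding sd by (rule qp_prod[OF q lo])
  have qps2: "query_perm n x s < 2 ^ (mH + mL)" by (rule qp_lt[OF q2 s2])
  have "(query_op n (mH + mL) x *\<^sub>v vt (2 ^ mL) a b) $ s = vt (2 ^ mL) a b $ (query_perm n x s)"
    unfolding query_op_pm[OF q2] by (rule pm_apply) (use a s2 qps2 in \<open>auto simp: power_add\<close>)
  also have "\<dots> = a $ hi * b $ (query_perm n x lo)"
    using qps2 a qpl unfolding qps by (simp add: vt_index power_add)
  also have "b $ (query_perm n x lo) = (query_op n mL x *\<^sub>v b) $ lo"
    unfolding query_op_pm[OF q] by (rule pm_apply[symmetric]) (use b lo qpl in auto)
  also have "a $ hi * (query_op n mL x *\<^sub>v b) $ lo = vt (2 ^ mL) a (query_op n mL x *\<^sub>v b) $ s"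
    using s a unfolding hi_def lo_def by (simp add: vt_index)
  finally show "(query_op n (mH + mL) x *\<^sub>v vt (2 ^ mL) a b) $ s = vt (2 ^ mL) a (query_op n mL x *\<^sub>v b) $ s" .
qed (use a in \<open>simp add: power_add query_op_def\<close>)

subsection \<open>Swapping the two registers\<close>

definition swp :: "nat \<Rightarrow> nat \<Rightarrow> nat \<Rightarrow> nat" where
  "swp H N r = (r mod N) * H + r div N"

lemma swp_lt: fixes H N r :: nat assumes "r < H * N" shows "swp H N r < N * H" "swp H N r div H = r mod N" "swp H N r mod H = r div N"
proof -
  have a: "r mod N < N" "r div N < H" using lt_mult_mod[OF assms] lt_mult_div[OF assms] by auto
  show "swp H N r < N * H" unfolding swp_def using pair_lt[OF a] .
  show "swp H N r div H = r mod N" "swp H N r mod H = r div N" unfolding swp_def using div_mod_pair[OF a] by auto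
qed

lemma swp_bij: "bij_betw (swp H N) {..<H * N} {..<H * N}"
proof (rule bij_betw_byWitness[where f' = "swp N H"])
  show "\<forall>a\<in>{..<H * N}. swp N H (swp H N a) = a"
  proof
    fix r assume "r \<in> {..<H * N}"
    hence r: "r < H * N" by simp
    have "swp N H (swp H N r) = (r div N) * N + r mod N" unfolding swp_def[of N H] using swp_lt[OF r] by simp
    thus "swp N H (swp H N r) = r" by simp
  qed
  show "\<forall>a\<in>{..<H * N}. swp H N (swp N H a) = a"
  proof
    fix r assume "r \<in> {..<H * N}"
    hence r: "r < N * H" by (simp add: mult.commute)
    have "swp H N (swp N H r) = (r div H) * H + r mod H" unfolding swp_def[of H N] using swp_lt[OF r] by simp
    thus "swp H N (swp N H r) = r" by simp
  qed
  show "swp H N ` {..<H * N} \<subseteq> {..<H * N}" using swp_lt(1) by (auto simp: mult.commute)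
  show "swp N H ` {..<H * N} \<subseteq> {..<H * N}" using swp_lt(1)[of _ N H] by (auto simp: mult.commute)
qed

lemma swap_vt: assumes a: "a \<in> carrier_vec H" and b: "b \<in> carrier_vec N"
  shows "pm (H * N) (swp H N) *\<^sub>v vt H b a = vt N a b"
proof (rule eq_vecI)
  fix r assume "r < dim_vec (vt N a b)"
  hence r: "r < H * N" using a by simp
  have "(pm (H * N) (swp H N) *\<^sub>v vt H b a) $ r = vt H b a $ (swp H N r)"
    by (rule pm_apply) (use a b r swp_lt(1)[OF r] in \<open>auto simp: mult.commute\<close>)
  also have "\<dots> = b $ (r mod N) * a $ (r div N)" using swp_lt[OF r] b by (simp add: vt_index)
  also have "\<dots> = vt N a b $ r" using r a by (simp add: vt_index)
  finally show "(pm (H * N) (swp H N) *\<^sub>v vt H b a) $ r = vt N a b $ r" .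
qed (use a b in simp)

definition nrm :: "complex vec \<Rightarrow> real" where
  "nrm v = (\<Sum>i<dim_vec v. (cmod (v $ i))\<^sup>2)"

lemma nrm_cnj: "complex_of_real (nrm v) = (\<Sum>i<dim_vec v. v $ i * cnj (v $ i))"
proof -
  have "\<And>i. v $ i * cnj (v $ i) = (complex_of_real (cmod (v $ i)))\<^sup>2"
    by (metis complex_norm_square of_real_power)
  thus ?thesis unfolding nrm_def by simp
qed

lemma unitary_nrm: assumes U: "unitary N U" and v: "v \<in> carrier_vec N"
  shows "nrm (U *\<^sub>v v) = nrm v"
proof -
  have cU: "U \<in> carrier_mat N N" using U unitaryD by auto
  have aU: "adj U * U = 1\<^sub>m N" using U unitaryD by auto
  have "complex_of_real (nrm (U *\<^sub>v v)) = (\<Sum>i<N. (\<Sum>k<N. U $$ (i,k) * v $ k) * cnj (\<Sum>l<N. U $$ (i,l) * v $ l))"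
    unfolding nrm_cnj using cU v by (simp add: index_mult_mat_vec scalar_prod_def atLeast0LessThan)
  also have "\<dots> = (\<Sum>i<N. \<Sum>l<N. \<Sum>k<N. v $ k * cnj (v $ l) * (cnj (U $$ (i,l)) * U $$ (i,k)))"
    by (simp add: sum_distrib_left sum_distrib_right mult_ac)
  also have "\<dots> = (\<Sum>l<N. \<Sum>i<N. \<Sum>k<N. v $ k * cnj (v $ l) * (cnj (U $$ (i,l)) * U $$ (i,k)))"
    by (rule sum.swap)
  also have "\<dots> = (\<Sum>l<N. \<Sum>k<N. \<Sum>i<N. v $ k * cnj (v $ l) * (cnj (U $$ (i,l)) * U $$ (i,k)))"
    by (rule sum.cong[OF refl], rule sum.swap)
  also have "\<dots> = (\<Sum>l<N. \<Sum>k<N. v $ k * cnj (v $ l) * (\<Sum>i<N. cnj (U $$ (i,l)) * U $$ (i,k)))"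
    by (simp add: sum_distrib_left)
  also have "\<dots> = (\<Sum>l<N. \<Sum>k<N. v $ k * cnj (v $ l) * (if l = k then 1 else 0))"
  proof (intro sum.cong refl)
    fix k l assume "k \<in> {..<N}" "l \<in> {..<N}"
    hence "(\<Sum>i<N. cnj (U $$ (i,l)) * U $$ (i,k)) = (adj U * U) $$ (l,k)" using cU by simp
    thus "v $ k * cnj (v $ l) * (\<Sum>i<N. cnj (U $$ (i,l)) * U $$ (i,k)) = v $ k * cnj (v $ l) * (if l = k then 1 else 0)"
      using aU \<open>k \<in> {..<N}\<close> \<open>l \<in> {..<N}\<close> by simp
  qed
  also have "\<dots> = (\<Sum>l<N. v $ l * cnj (v $ l))"
  proof (rule sum.cong[OF refl])
    fix l assume l: "l \<in> {..<N}"
    have "(\<Sum>k<N. v $ k * cnj (v $ l) * (if l = k then 1 else 0)) = (\<Sum>k<N. if k = l then v $ l * cnj (v $ l) else 0)"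
      by (rule sum.cong) auto
    thus "(\<Sum>k<N. v $ k * cnj (v $ l) * (if l = k then 1 else 0)) = v $ l * cnj (v $ l)" using l by simp
  qed
  also have "\<dots> = complex_of_real (nrm v)" unfolding nrm_cnj using v by simp
  finally show ?thesis by (simp only: of_real_eq_iff)
qed

lemma nrm_unit: "i < N \<Longrightarrow> nrm (unit_vec N i) = 1"
proof -
  assume i: "i < N"
  have "nrm (unit_vec N i) = (\<Sum>j<N. if j = i then 1 else 0)"
    unfolding nrm_def by (rule sum.cong) (auto simp: unit_vec_def)
  thus ?thesis using i by simp
qed

subsection \<open>Evolution\<close>

lemma evolve_carrier: assumes "\<forall>U\<in>set Us. U \<in> carrier_mat (2 ^ m) (2 ^ m)" "v \<in> carrier_vec (2 ^ m)"
  shows "evolve n m x Us v \<in> carrier_vec (2 ^ m)"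
  using assms
proof (induction Us arbitrary: v)
  case Nil thus ?case by simp
next
  case (Cons U Us)
  have U: "U \<in> carrier_mat (2 ^ m) (2 ^ m)" using Cons.prems(1) by simp
  have w: "query_op n m x *\<^sub>v v \<in> carrier_vec (2 ^ m)" by (rule carrier_vecI) (simp add: query_op_def)
  have "U *\<^sub>v (query_op n m x *\<^sub>v v) \<in> carrier_vec (2 ^ m)" by (rule mult_mat_vec_carrier[OF U w])
  moreover have "\<forall>U\<in>set Us. U \<in> carrier_mat (2 ^ m) (2 ^ m)" using Cons.prems(1) by simp
  ultimately have "evolve n m x Us (U *\<^sub>v (query_op n m x *\<^sub>v v)) \<in> carrier_vec (2 ^ m)" using Cons.IH by blast
  thus ?case by simp
qed

lemma evolve_nrm: assumes "idx_qubits n < m" "\<forall>U\<in>set Us. unitary (2 ^ m) U" "v \<in> carrier_vec (2 ^ m)"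
  shows "nrm (evolve n m x Us v) = nrm v"
  using assms(2,3)
proof (induction Us arbitrary: v)
  case Nil thus ?case by simp
next
  case (Cons U Us)
  have U: "unitary (2 ^ m) U" using Cons by auto
  have cU: "U \<in> carrier_mat (2 ^ m) (2 ^ m)" using U unitaryD by auto
  have w: "query_op n m x *\<^sub>v v \<in> carrier_vec (2 ^ m)" by (rule carrier_vecI) (simp add: query_op_def)
  have w2: "U *\<^sub>v (query_op n m x *\<^sub>v v) \<in> carrier_vec (2 ^ m)" by (rule mult_mat_vec_carrier[OF cU w])
  have "nrm (evolve n m x (U # Us) v) = nrm (evolve n m x Us (U *\<^sub>v (query_op n m x *\<^sub>v v)))" by simp
  also have "\<dots> = nrm (U *\<^sub>v (query_op n m x *\<^sub>v v))" using Cons.IH[OF _ w2] Cons.prems(1) by simp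
  also have "\<dots> = nrm (query_op n m x *\<^sub>v v)" by (rule unitary_nrm[OF U w])
  also have "\<dots> = nrm v" by (rule unitary_nrm[OF unitary_query[OF assms(1)] Cons.prems(2)])
  finally show ?case .
qed

lemma tl_sub: "set (tl Us) \<subseteq> set Us" by (cases Us) auto

lemma valid_algD: assumes "valid_alg n m Us S"
  shows "Us \<noteq> []" "idx_qubits n < m" "\<forall>U\<in>set Us. unitary (2 ^ m) U" "S \<subseteq> {0..<m}"
  using assms unfolding valid_alg_def by blast+

lemma final_state_carrier: assumes "valid_alg n m Us S" shows "final_state n m Us x \<in> carrier_vec (2 ^ m)"
proof -
  note V = valid_algD[OF assms]
  have all: "\<forall>U\<in>set Us. U \<in> carrier_mat (2 ^ m) (2 ^ m)" using V(3) unitaryD(1) by auto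
  have t: "\<forall>U\<in>set (tl Us). U \<in> carrier_mat (2 ^ m) (2 ^ m)"
  proof
    fix U assume "U \<in> set (tl Us)"
    hence "U \<in> set Us" using tl_sub[of Us] by auto
    thus "U \<in> carrier_mat (2 ^ m) (2 ^ m)" using all by simp
  qed
  have h: "hd Us \<in> carrier_mat (2 ^ m) (2 ^ m)" using all hd_in_set[OF V(1)] by simp
  have v: "hd Us *\<^sub>v unit_vec (2 ^ m) 0 \<in> carrier_vec (2 ^ m)" by (rule mult_mat_vec_carrier[OF h]) simp
  show ?thesis unfolding final_state_def by (rule evolve_carrier[OF t v])
qed

lemma final_state_nrm: assumes "valid_alg n m Us S" shows "nrm (final_state n m Us x) = 1"
proof -
  note V = valid_algD[OF assms]
  have h: "unitary (2 ^ m) (hd Us)" using V(3) hd_in_set[OF V(1)] by simp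
  have tl: "\<forall>U\<in>set (tl Us). unitary (2 ^ m) U"
  proof
    fix U assume "U \<in> set (tl Us)"
    hence "U \<in> set Us" using tl_sub[of Us] by auto
    thus "unitary (2 ^ m) U" using V(3) by simp
  qed
  have cU: "hd Us \<in> carrier_mat (2 ^ m) (2 ^ m)" using unitaryD(1)[OF h] .
  have v: "hd Us *\<^sub>v unit_vec (2 ^ m) 0 \<in> carrier_vec (2 ^ m)" by (rule mult_mat_vec_carrier[OF cU]) simp
  have "nrm (final_state n m Us x) = nrm (hd Us *\<^sub>v unit_vec (2 ^ m) 0)"
    unfolding final_state_def by (rule evolve_nrm[OF V(2) tl v])
  also have "\<dots> = nrm (unit_vec (2 ^ m) 0)" by (rule unitary_nrm[OF h]) simp
  also have "\<dots> = 1" by (rule nrm_unit) simp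
  finally show ?thesis .
qed


definition KK :: "nat \<Rightarrow> nat set \<Rightarrow> nat list" where "KK m S = sorted_list_of_set ({0..<m} - S)"
definition LL :: "nat set \<Rightarrow> nat list" where "LL S = sorted_list_of_set S"

lemma pt_def2: "partial_trace m S \<psi> = mat (2 ^ length (KK m S)) (2 ^ length (KK m S)) (\<lambda>(a,a').
   \<Sum>t<2 ^ length (LL S). \<psi> $ (embed (KK m S) a + embed (LL S) t) * cnj (\<psi> $ (embed (KK m S) a' + embed (LL S) t)))"
  unfolding partial_trace_def KK_def LL_def Let_def ..

lemma pt_carrier[simp]: "partial_trace m S \<psi> \<in> carrier_mat (2 ^ length (KK m S)) (2 ^ length (KK m S))"
  unfolding pt_def2 by simp

lemma pt_dim[simp]: "dim_row (partial_trace m S \<psi>) = 2 ^ length (KK m S)" "dim_col (partial_trace m S \<psi>) = 2 ^ length (KK m S)"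
  unfolding pt_def2 by simp_all

lemma pt_herm: "adj (partial_trace m S \<psi>) = partial_trace m S \<psi>"
  by (rule eq_matI) (auto simp: pt_def2 mult.commute)

lemma KL_props: assumes "S \<subseteq> {0..<m}"
  shows "distinct (KK m S)" "distinct (LL S)" "set (KK m S) \<inter> set (LL S) = {}" "set (KK m S) \<union> set (LL S) = {..<m}"
  using pt_lists[OF assms] unfolding KK_def LL_def by auto

lemma pt_tr: assumes S: "S \<subseteq> {0..<m}" and psi: "dim_vec \<psi> = 2 ^ m"
  shows "tr (partial_trace m S \<psi>) = complex_of_real (nrm \<psi>)"
proof -
  note P = KL_props[OF S]
  have "tr (partial_trace m S \<psi>) = (\<Sum>a<2 ^ length (KK m S). \<Sum>t<2 ^ length (LL S).
      (\<lambda>s. \<psi> $ s * cnj (\<psi> $ s)) (embed (KK m S) a + embed (LL S) t))"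
    unfolding tr_def by (simp add: pt_def2)
  also have "\<dots> = (\<Sum>s<2 ^ m. \<psi> $ s * cnj (\<psi> $ s))" by (rule embed_sum[OF P])
  also have "\<dots> = complex_of_real (nrm \<psi>)" unfolding nrm_cnj psi ..
  finally show ?thesis .
qed

lemma alg_output_props: assumes V: "valid_alg n m Us S"
  shows "alg_output n m Us S x \<in> carrier_mat (2 ^ length (KK m S)) (2 ^ length (KK m S))"
    "adj (alg_output n m Us S x) = alg_output n m Us S x"
    "tr (alg_output n m Us S x) = 1"
proof -
  show "alg_output n m Us S x \<in> carrier_mat (2 ^ length (KK m S)) (2 ^ length (KK m S))"
    unfolding alg_output_def by simp
  show "adj (alg_output n m Us S x) = alg_output n m Us S x" unfolding alg_output_def by (rule pt_herm)
  have S: "S \<subseteq> {0..<m}" using valid_algD[OF V] by simp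
  have d: "dim_vec (final_state n m Us x) = 2 ^ m" using final_state_carrier[OF V] by simp
  show "tr (alg_output n m Us S x) = 1" unfolding alg_output_def pt_tr[OF S d] final_state_nrm[OF V] by simp
qed

lemma sorted_union: fixes A B :: "nat set" assumes "finite A" "finite B" "\<forall>a\<in>A. \<forall>b\<in>B. a < b"
  shows "sorted_list_of_set (A \<union> B) = sorted_list_of_set A @ sorted_list_of_set B"
proof -
  have d: "A \<inter> B = {}" using assms(3) by auto
  have s1: "sorted_wrt (<) (sorted_list_of_set A @ sorted_list_of_set B)"
    using assms by (auto simp: sorted_wrt_append)
  have s2: "set (sorted_list_of_set A @ sorted_list_of_set B) = A \<union> B" using assms by simp
  have s3: "length (sorted_list_of_set A @ sorted_list_of_set B) = card (A \<union> B)"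
    using assms d by (simp add: card_Un_disjoint)
  have fin: "finite (A \<union> B)" using assms by simp
  show ?thesis using sorted_list_of_set_unique[OF fin, of "sorted_list_of_set A @ sorted_list_of_set B"] s1 s2 s3 by blast
qed

lemma sorted_shift: fixes A :: "nat set" assumes "finite A"
  shows "sorted_list_of_set ((+) c ` A) = map ((+) c) (sorted_list_of_set A)"
proof -
  have s1: "sorted_wrt (<) (map ((+) c) (sorted_list_of_set A))"
    unfolding sorted_wrt_map by (rule sorted_wrt_mono_rel[of _ "(<)"]) auto
  have s2: "set (map ((+) c) (sorted_list_of_set A)) = (+) c ` A" using assms by simp
  have s3: "length (map ((+) c) (sorted_list_of_set A)) = card ((+) c ` A)"
    using assms by (simp add: card_image)
  have fin: "finite ((+) c ` A)" using assms by simp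
  show ?thesis using sorted_list_of_set_unique[OF fin, of "map ((+) c) (sorted_list_of_set A)"] s1 s2 s3 by blast
qed

lemma KK_comb: assumes S1: "S1 \<subseteq> {0..<m1}" and S2: "S2 \<subseteq> {0..<m2}"
  shows "KK (m1 + m2) (S2 \<union> (+) m2 ` S1) = KK m2 S2 @ map ((+) m2) (KK m1 S1)"
proof -
  have "{0..<m1 + m2} - (S2 \<union> (+) m2 ` S1) = ({0..<m2} - S2) \<union> (+) m2 ` ({0..<m1} - S1)"
  proof
    show "{0..<m1 + m2} - (S2 \<union> (+) m2 ` S1) \<subseteq> ({0..<m2} - S2) \<union> (+) m2 ` ({0..<m1} - S1)"
    proof
      fix p assume p: "p \<in> {0..<m1 + m2} - (S2 \<union> (+) m2 ` S1)"
      show "p \<in> ({0..<m2} - S2) \<union> (+) m2 ` ({0..<m1} - S1)"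
      proof (cases "p < m2")
        case True thus ?thesis using p by auto
      next
        case False
        hence pe: "p = m2 + (p - m2)" by simp
        have "p - m2 < m1" using p False by auto
        moreover have "p - m2 \<notin> S1"
        proof
          assume "p - m2 \<in> S1"
          hence "m2 + (p - m2) \<in> (+) m2 ` S1" by (rule imageI)
          thus False using p pe by simp
        qed
        ultimately have "p - m2 \<in> {0..<m1} - S1" by simp
        hence "p \<in> (+) m2 ` ({0..<m1} - S1)" using pe by (metis image_eqI)
        thus ?thesis by blast
      qed
    qed
    show "({0..<m2} - S2) \<union> (+) m2 ` ({0..<m1} - S1) \<subseteq> {0..<m1 + m2} - (S2 \<union> (+) m2 ` S1)"
      using S2 by auto
  qed
  thus ?thesis unfolding KK_def
    by (simp add: sorted_union sorted_shift)
qed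

lemma LL_comb: assumes S1: "S1 \<subseteq> {0..<m1}" and S2: "S2 \<subseteq> {0..<m2}"
  shows "LL (S2 \<union> (+) m2 ` S1) = LL S2 @ map ((+) m2) (LL S1)"
proof -
  have f1: "finite S1" using finite_subset[OF S1] by simp
  have f2: "finite S2" using finite_subset[OF S2] by simp
  have "\<forall>a\<in>S2. \<forall>b\<in>(+) m2 ` S1. a < b" using S2 by auto
  thus ?thesis unfolding LL_def using f1 f2 by (simp add: sorted_union sorted_shift)
qed

lemma sum_lessThan_add: fixes a b :: nat shows "(\<Sum>j<a + b. f j) = (\<Sum>j<a. f j) + (\<Sum>j<b. f (a + j))"
  by (induction b) (auto simp: add_ac)

lemma qbit_mod: "j < k \<Longrightarrow> qbit (a mod 2 ^ k) j = qbit a j"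
  unfolding qbit_bit take_bit_eq_mod[symmetric] by (simp add: bit_take_bit_iff)

lemma qbit_div: "qbit (a div 2 ^ k) j = qbit a (k + j)"
  unfolding qbit_bit drop_bit_eq_div[symmetric] by (simp add: bit_drop_bit_eq)

lemma embed_app: "embed (K2 @ map ((+) m2) K1) a = embed K2 (a mod 2 ^ length K2) + 2 ^ m2 * embed K1 (a div 2 ^ length K2)"
proof -
  have "embed (K2 @ map ((+) m2) K1) a = (\<Sum>j<length K2. if qbit a j then 2 ^ ((K2 @ map ((+) m2) K1) ! j) else 0)
     + (\<Sum>j<length K1. if qbit a (length K2 + j) then 2 ^ ((K2 @ map ((+) m2) K1) ! (length K2 + j)) else 0)"
    unfolding embed_def by (simp add: sum_lessThan_add)
  also have "(\<Sum>j<length K2. if qbit a j then 2 ^ ((K2 @ map ((+) m2) K1) ! j) else 0)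
      = (\<Sum>j<length K2. if qbit a j then 2 ^ (K2 ! j) else 0)"
    by (rule sum.cong) (auto simp: nth_append)
  also have "(\<Sum>j<length K1. if qbit a (length K2 + j) then 2 ^ ((K2 @ map ((+) m2) K1) ! (length K2 + j)) else 0)
      = (\<Sum>j<length K1. if qbit a (length K2 + j) then 2 ^ (m2 + K1 ! j) else 0)"
    by (rule sum.cong) (auto simp: nth_append)
  also have "(\<Sum>j<length K2. if qbit a j then 2 ^ (K2 ! j) else 0) = embed K2 (a mod 2 ^ length K2)"
    unfolding embed_def by (rule sum.cong) (auto simp: qbit_mod)
  also have "(\<Sum>j<length K1. if qbit a (length K2 + j) then 2 ^ (m2 + K1 ! j) else 0)
      = 2 ^ m2 * embed K1 (a div 2 ^ length K2)"
    unfolding embed_def sum_distrib_left by (rule sum.cong) (auto simp: qbit_div power_add)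
  finally show ?thesis .
qed


lemma pt_prod:
  assumes S1: "S1 \<subseteq> {0..<m1}" and S2: "S2 \<subseteq> {0..<m2}"
    and p1: "\<phi>1 \<in> carrier_vec (2 ^ m1)" and p2: "\<phi>2 \<in> carrier_vec (2 ^ m2)"
  shows "partial_trace (m1 + m2) (S2 \<union> (+) m2 ` S1) (vt (2 ^ m2) \<phi>1 \<phi>2)
    = tens (2 ^ length (KK m2 S2)) (partial_trace m1 S1 \<phi>1) (partial_trace m2 S2 \<phi>2)"
proof -
  define K1 where "K1 = KK m1 S1"
  define L1 where "L1 = LL S1"
  define K2 where "K2 = KK m2 S2"
  define L2 where "L2 = LL S2"
  define N2 :: nat where "N2 = 2 ^ length K2"
  define M2 :: nat where "M2 = 2 ^ length L2"
  define \<psi> where "\<psi> = vt (2 ^ m2) \<phi>1 \<phi>2"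
  define X1 where "X1 = (\<lambda>a t. embed K1 a + embed L1 t)"
  define X2 where "X2 = (\<lambda>a t. embed K2 a + embed L2 t)"
  have P1: "distinct K1" "distinct L1" "set K1 \<inter> set L1 = {}" "set K1 \<union> set L1 = {..<m1}"
    using KL_props[OF S1] unfolding K1_def L1_def by auto
  have P2: "distinct K2" "distinct L2" "set K2 \<inter> set L2 = {}" "set K2 \<union> set L2 = {..<m2}"
    using KL_props[OF S2] unfolding K2_def L2_def by auto
  have X1lt: "\<And>a t. X1 a t < 2 ^ m1" unfolding X1_def by (rule embed_lt[OF P1])
  have X2lt: "\<And>a t. X2 a t < 2 ^ m2" unfolding X2_def by (rule embed_lt[OF P2])
  have KC: "KK (m1 + m2) (S2 \<union> (+) m2 ` S1) = K2 @ map ((+) m2) K1"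
    unfolding K1_def K2_def by (rule KK_comb[OF S1 S2])
  have LC: "LL (S2 \<union> (+) m2 ` S1) = L2 @ map ((+) m2) L1"
    unfolding L1_def L2_def by (rule LL_comb[OF S1 S2])
  have dp1: "dim_vec \<phi>1 = 2 ^ m1" using p1 by simp
  have key: "\<psi> $ (embed (K2 @ map ((+) m2) K1) a + embed (L2 @ map ((+) m2) L1) t)
     = \<phi>1 $ X1 (a div N2) (t div M2) * \<phi>2 $ X2 (a mod N2) (t mod M2)" for a t
  proof -
    have e: "embed (K2 @ map ((+) m2) K1) a + embed (L2 @ map ((+) m2) L1) t
       = X1 (a div N2) (t div M2) * 2 ^ m2 + X2 (a mod N2) (t mod M2)"
      unfolding embed_app X1_def X2_def N2_def M2_def by (simp add: algebra_simps)
    have lt: "X1 (a div N2) (t div M2) * 2 ^ m2 + X2 (a mod N2) (t mod M2) < dim_vec \<phi>1 * 2 ^ m2"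
      unfolding dp1 by (rule pair_lt[OF X1lt X2lt])
    show ?thesis unfolding e \<psi>_def vt_index[OF lt] using div_mod_pair[OF X1lt X2lt] by simp
  qed
  define \<rho> where "\<rho> = partial_trace m1 S1 \<phi>1"
  define \<sigma> where "\<sigma> = partial_trace m2 S2 \<phi>2"
  have \<rho>: "\<rho> \<in> carrier_mat (2 ^ length K1) (2 ^ length K1)" unfolding \<rho>_def K1_def by simp
  have \<sigma>: "\<sigma> \<in> carrier_mat N2 N2" unfolding \<sigma>_def N2_def K2_def by simp
  show ?thesis unfolding \<rho>_def[symmetric] \<sigma>_def[symmetric] \<psi>_def[symmetric] K2_def[symmetric] N2_def[symmetric]
  proof (rule eq_matI)
    have dimeq: "(2::nat) ^ length (KK (m1 + m2) (S2 \<union> (+) m2 ` S1)) = 2 ^ length K1 * N2"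
      unfolding KC N2_def by (simp add: power_add)
    show "dim_row (partial_trace (m1 + m2) (S2 \<union> (+) m2 ` S1) \<psi>) = dim_row (tens N2 \<rho> \<sigma>)"
      using \<rho> dimeq by simp
    show "dim_col (partial_trace (m1 + m2) (S2 \<union> (+) m2 ` S1) \<psi>) = dim_col (tens N2 \<rho> \<sigma>)"
      using \<rho> dimeq by simp
    fix a a' :: nat assume "a < dim_row (tens N2 \<rho> \<sigma>)" "a' < dim_col (tens N2 \<rho> \<sigma>)"
    hence a: "a < 2 ^ length K1 * N2" and a': "a' < 2 ^ length K1 * N2" using \<rho> by auto
    have "partial_trace (m1 + m2) (S2 \<union> (+) m2 ` S1) \<psi> $$ (a, a')
      = (\<Sum>t<2 ^ length L1 * M2. \<psi> $ (embed (K2 @ map ((+) m2) K1) a + embed (L2 @ map ((+) m2) L1) t)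
          * cnj (\<psi> $ (embed (K2 @ map ((+) m2) K1) a' + embed (L2 @ map ((+) m2) L1) t)))"
      using a a' dimeq unfolding pt_def2 KC LC M2_def by (simp add: power_add mult.commute)
    also have "\<dots> = (\<Sum>t1<2 ^ length L1. \<Sum>t2<M2. (\<lambda>t. \<psi> $ (embed (K2 @ map ((+) m2) K1) a + embed (L2 @ map ((+) m2) L1) t)
          * cnj (\<psi> $ (embed (K2 @ map ((+) m2) K1) a' + embed (L2 @ map ((+) m2) L1) t))) (t1 * M2 + t2))"
      by (rule sum_split_prod)
    also have "\<dots> = (\<Sum>t1<2 ^ length L1. \<Sum>t2<M2.
         (\<phi>1 $ X1 (a div N2) t1 * cnj (\<phi>1 $ X1 (a' div N2) t1)) * (\<phi>2 $ X2 (a mod N2) t2 * cnj (\<phi>2 $ X2 (a' mod N2) t2)))"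
    proof (intro sum.cong refl)
      fix t1 t2 :: nat assume t1: "t1 \<in> {..<2 ^ length L1}" and t2: "t2 \<in> {..<M2}"
      have dm: "(t1 * M2 + t2) div M2 = t1" "(t1 * M2 + t2) mod M2 = t2" using div_mod_pair[of t1 "2 ^ length L1" t2 M2] t1 t2 by auto
      show "(\<lambda>t. \<psi> $ (embed (K2 @ map ((+) m2) K1) a + embed (L2 @ map ((+) m2) L1) t)
          * cnj (\<psi> $ (embed (K2 @ map ((+) m2) K1) a' + embed (L2 @ map ((+) m2) L1) t))) (t1 * M2 + t2)
        = (\<phi>1 $ X1 (a div N2) t1 * cnj (\<phi>1 $ X1 (a' div N2) t1)) * (\<phi>2 $ X2 (a mod N2) t2 * cnj (\<phi>2 $ X2 (a' mod N2) t2))"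
        unfolding key dm by (simp add: mult_ac)
    qed
    also have "\<dots> = (\<Sum>t1<2 ^ length L1. \<phi>1 $ X1 (a div N2) t1 * cnj (\<phi>1 $ X1 (a' div N2) t1))
        * (\<Sum>t2<M2. \<phi>2 $ X2 (a mod N2) t2 * cnj (\<phi>2 $ X2 (a' mod N2) t2))"
      by (simp add: sum_product)
    also have "\<dots> = \<rho> $$ (a div N2, a' div N2) * \<sigma> $$ (a mod N2, a' mod N2)"
    proof -
      have b1: "a div N2 < 2 ^ length K1" "a' div N2 < 2 ^ length K1" using a a' lt_mult_div by auto
      have b2: "a mod N2 < N2" "a' mod N2 < N2" using a a' lt_mult_mod by auto
      show ?thesis unfolding \<rho>_def \<sigma>_def pt_def2 K1_def[symmetric] L1_def[symmetric] K2_def[symmetric]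
          L2_def[symmetric] N2_def[symmetric] M2_def[symmetric] X1_def X2_def
        using b1 b2 unfolding N2_def by simp
    qed
    also have "\<dots> = tens N2 \<rho> \<sigma> $$ (a, a')" using a a' \<rho> by (simp add: tens_index)
    finally show "partial_trace (m1 + m2) (S2 \<union> (+) m2 ` S1) \<psi> $$ (a, a') = tens N2 \<rho> \<sigma> $$ (a, a')" .
  qed
qed


lemma evolve_lift:
  assumes q: "idx_qubits n < mL" and Vs: "\<forall>V\<in>set Vs. V \<in> carrier_mat (2 ^ mL) (2 ^ mL)"
    and a: "a \<in> carrier_vec (2 ^ mH)" and b: "b \<in> carrier_vec (2 ^ mL)"
  shows "evolve n (mH + mL) x (map (\<lambda>V. tens (2 ^ mL) (1\<^sub>m (2 ^ mH)) V) Vs) (vt (2 ^ mL) a b)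
    = vt (2 ^ mL) a (evolve n mL x Vs b)"
  using Vs b
proof (induction Vs arbitrary: b)
  case Nil thus ?case by simp
next
  case (Cons V Vs)
  have V: "V \<in> carrier_mat (2 ^ mL) (2 ^ mL)" using Cons.prems(1) by simp
  have Vs': "\<forall>V\<in>set Vs. V \<in> carrier_mat (2 ^ mL) (2 ^ mL)" using Cons.prems(1) by simp
  have qb: "query_op n mL x *\<^sub>v b \<in> carrier_vec (2 ^ mL)" by (rule carrier_vecI) (simp add: query_op_def)
  have Vqb: "V *\<^sub>v (query_op n mL x *\<^sub>v b) \<in> carrier_vec (2 ^ mL)" by (rule mult_mat_vec_carrier[OF V qb])
  have "tens (2 ^ mL) (1\<^sub>m (2 ^ mH)) V *\<^sub>v (query_op n (mH + mL) x *\<^sub>v vt (2 ^ mL) a b)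
      = tens (2 ^ mL) (1\<^sub>m (2 ^ mH)) V *\<^sub>v vt (2 ^ mL) a (query_op n mL x *\<^sub>v b)"
    unfolding query_vt[OF q a Cons.prems(2)] ..
  also have "\<dots> = vt (2 ^ mL) (1\<^sub>m (2 ^ mH) *\<^sub>v a) (V *\<^sub>v (query_op n mL x *\<^sub>v b))"
    by (rule vt_mult[OF one_carrier_mat V a qb])
  also have "1\<^sub>m (2 ^ mH) *\<^sub>v a = a" using a by simp
  finally have e: "tens (2 ^ mL) (1\<^sub>m (2 ^ mH)) V *\<^sub>v (query_op n (mH + mL) x *\<^sub>v vt (2 ^ mL) a b)
      = vt (2 ^ mL) a (V *\<^sub>v (query_op n mL x *\<^sub>v b))" .
  show ?case unfolding list.map evolve.simps e by (rule Cons.IH[OF Vs' Vqb])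
qed

lemma evolve_append: "evolve n m x (As @ Bs) v = evolve n m x Bs (evolve n m x As v)"
  by (induction As arbitrary: v) auto

lemma evolve_snoc_mult: assumes J: "J \<in> carrier_mat (2 ^ m) (2 ^ m)" and M: "M \<in> carrier_mat (2 ^ m) (2 ^ m)"
  shows "evolve n m x (As @ [J * M]) v = J *\<^sub>v evolve n m x (As @ [M]) v"
proof (induction As arbitrary: v)
  case Nil
  have qv: "query_op n m x *\<^sub>v v \<in> carrier_vec (2 ^ m)" by (rule carrier_vecI) (simp add: query_op_def)
  show ?case using assoc_mult_mat_vec[OF J M qv] by simp
next
  case (Cons A As)
  thus ?case by simp
qed

lemma run_junction: assumes ne: "Ls \<noteq> []" and J: "J \<in> carrier_mat (2 ^ m) (2 ^ m)"
  and Lc: "last Ls \<in> carrier_mat (2 ^ m) (2 ^ m)" and v: "v \<in> carrier_vec (2 ^ m)"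
  shows "evolve n m x (tl (butlast Ls @ [J * last Ls] @ Ks)) (hd (butlast Ls @ [J * last Ls] @ Ks) *\<^sub>v v)
    = evolve n m x Ks (J *\<^sub>v evolve n m x (tl Ls) (hd Ls *\<^sub>v v))"
proof -
  obtain L0 Lr where Ls: "Ls = L0 # Lr" using ne by (cases Ls) auto
  show ?thesis
  proof (cases "Lr = []")
    case True
    have L0: "L0 \<in> carrier_mat (2 ^ m) (2 ^ m)" using Lc unfolding Ls True by simp
    show ?thesis unfolding Ls True using assoc_mult_mat_vec[OF J L0 v] by simp
  next
    case False
    have bl: "butlast Ls = L0 # butlast Lr" "last Ls = last Lr" unfolding Ls using False by auto
    have Lr: "Lr = butlast Lr @ [last Lr]" using False by simp
    have "evolve n m x (tl (butlast Ls @ [J * last Ls] @ Ks)) (hd (butlast Ls @ [J * last Ls] @ Ks) *\<^sub>v v)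
        = evolve n m x Ks (evolve n m x (butlast Lr @ [J * last Lr]) (L0 *\<^sub>v v))"
      unfolding bl by (simp add: evolve_append[symmetric])
    also have "evolve n m x (butlast Lr @ [J * last Lr]) (L0 *\<^sub>v v) = J *\<^sub>v evolve n m x (butlast Lr @ [last Lr]) (L0 *\<^sub>v v)"
      by (rule evolve_snoc_mult[OF J]) (use Lc bl in simp)
    also have "butlast Lr @ [last Lr] = Lr" using Lr by simp
    finally show ?thesis unfolding Ls by simp
  qed
qed


lemma combined:
  assumes V1: "valid_alg n m1 Us1 S1" and V2: "valid_alg n m2 Us2 S2"
  shows "\<exists>Us. valid_alg n (m1 + m2) Us (S2 \<union> (+) m2 ` S1) \<and> length Us = length Us1 + length Us2 - 1 \<and>
    (\<forall>x. alg_output n (m1 + m2) Us (S2 \<union> (+) m2 ` S1) x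
       = tens (2 ^ length (KK m2 S2)) (alg_output n m1 Us1 S1 x) (alg_output n m2 Us2 S2 x))"
proof -
  note A1 = valid_algD[OF V1]
  note A2 = valid_algD[OF V2]
  define H1 :: nat where "H1 = 2 ^ m1"
  define H2 :: nat where "H2 = 2 ^ m2"
  define MM :: nat where "MM = 2 ^ (m1 + m2)"
  have h12: "H1 * H2 = MM" unfolding H1_def H2_def MM_def by (simp add: power_add)
  have h21: "H2 * H1 = MM" unfolding H1_def H2_def MM_def by (simp add: power_add)
  define lift1 where "lift1 = (\<lambda>U. tens H1 (1\<^sub>m H2) U)"
  define lift2 where "lift2 = (\<lambda>V. tens H2 (1\<^sub>m H1) V)"
  define SW where "SW = pm (H1 * H2) (swp H1 H2)"
  define J where "J = lift2 (hd Us2) * SW"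
  define Ls where "Ls = map lift1 Us1"
  define Ks where "Ks = map lift2 (tl Us2)"
  define C where "C = butlast Ls @ [J * last Ls] @ Ks"
  have c1: "\<And>U. U \<in> set Us1 \<Longrightarrow> U \<in> carrier_mat H1 H1" using A1(3) unitaryD(1) unfolding H1_def by auto
  have c2: "\<And>U. U \<in> set Us2 \<Longrightarrow> U \<in> carrier_mat H2 H2" using A2(3) unitaryD(1) unfolding H2_def by auto
  have uL1: "\<And>U. U \<in> set Us1 \<Longrightarrow> unitary MM (lift1 U)"
  proof -
    fix U assume "U \<in> set Us1"
    hence "unitary H1 U" using A1(3) unfolding H1_def by auto
    from unitary_tens[OF unitary_one[of H2] this] show "unitary MM (lift1 U)" unfolding lift1_def h21 .
  qed
  have uL2: "\<And>U. U \<in> set Us2 \<Longrightarrow> unitary MM (lift2 U)"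
  proof -
    fix U assume "U \<in> set Us2"
    hence "unitary H2 U" using A2(3) unfolding H2_def by auto
    from unitary_tens[OF unitary_one[of H1] this] show "unitary MM (lift2 U)" unfolding lift2_def h12 .
  qed
  have uSW: "unitary MM SW" unfolding SW_def h12[symmetric] by (rule unitary_pm[OF swp_bij])
  have uJ: "unitary MM J" unfolding J_def by (rule unitary_mult[OF uL2[OF hd_in_set[OF A2(1)]] uSW])
  have Lsne: "Ls \<noteq> []" unfolding Ls_def using A1(1) by simp
  have uLast: "unitary MM (last Ls)" unfolding Ls_def last_map[OF A1(1)] by (rule uL1[OF last_in_set[OF A1(1)]])
  have uC: "\<forall>U\<in>set C. unitary MM U"
  proof
    fix U assume "U \<in> set C"
    hence "U \<in> set (butlast Ls) \<or> U = J * last Ls \<or> U \<in> set Ks" unfolding C_def by auto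
    thus "unitary MM U"
    proof (elim disjE)
      assume "U \<in> set (butlast Ls)"
      hence "U \<in> set Ls" by (rule in_set_butlastD)
      thus ?thesis unfolding Ls_def using uL1 by auto
    next
      assume "U = J * last Ls"
      thus ?thesis using unitary_mult[OF uJ uLast] by simp
    next
      assume "U \<in> set Ks"
      hence "U \<in> lift2 ` set Us2" unfolding Ks_def using tl_sub[of Us2] by auto
      thus ?thesis using uL2 by auto
    qed
  qed
  have validC: "valid_alg n (m1 + m2) C (S2 \<union> (+) m2 ` S1)"
    unfolding valid_alg_def
  proof (intro conjI)
    show "C \<noteq> []" unfolding C_def by simp
    show "idx_qubits n < m1 + m2" using A1(2) by simp
    show "\<forall>U\<in>set C. unitary (2 ^ (m1 + m2)) U" using uC unfolding MM_def .
    show "S2 \<union> (+) m2 ` S1 \<subseteq> {0..<m1 + m2}" using A1(4) A2(4) by auto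
  qed
  have lenC: "length C = length Us1 + length Us2 - 1"
    unfolding C_def Ls_def Ks_def using A1(1) A2(1) by (cases Us1; cases Us2) auto
  have outC: "alg_output n (m1 + m2) C (S2 \<union> (+) m2 ` S1) x
       = tens (2 ^ length (KK m2 S2)) (alg_output n m1 Us1 S1 x) (alg_output n m2 Us2 S2 x)" for x
  proof -
    define e1 :: "complex vec" where "e1 = unit_vec H1 0"
    define e2 :: "complex vec" where "e2 = unit_vec H2 0"
    have e1c: "e1 \<in> carrier_vec H1" unfolding e1_def by simp
    have e2c: "e2 \<in> carrier_vec H2" unfolding e2_def by simp
    define \<phi>1 where "\<phi>1 = final_state n m1 Us1 x"
    define \<phi>2 where "\<phi>2 = final_state n m2 Us2 x"
    have p1: "\<phi>1 \<in> carrier_vec H1" unfolding \<phi>1_def H1_def by (rule final_state_carrier[OF V1])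
    have p2: "\<phi>2 \<in> carrier_vec H2" unfolding \<phi>2_def H2_def by (rule final_state_carrier[OF V2])
    define U0 where "U0 = hd Us1"
    define V0 where "V0 = hd Us2"
    have U0: "U0 \<in> carrier_mat H1 H1" unfolding U0_def by (rule c1[OF hd_in_set[OF A1(1)]])
    have V0: "V0 \<in> carrier_mat H2 H2" unfolding V0_def by (rule c2[OF hd_in_set[OF A2(1)]])
    have U0e: "U0 *\<^sub>v e1 \<in> carrier_vec H1" by (rule mult_mat_vec_carrier[OF U0 e1c])
    have V0e: "V0 *\<^sub>v e2 \<in> carrier_vec H2" by (rule mult_mat_vec_carrier[OF V0 e2c])
    have e0: "unit_vec MM 0 = vt H1 e2 e1" unfolding h21[symmetric] e1_def e2_def
      by (rule unit_vt) (auto simp: H1_def H2_def)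
    have e0c: "unit_vec MM 0 \<in> carrier_vec MM" by simp
    have JC: "J \<in> carrier_mat MM MM" using uJ unitaryD by auto
    have LC: "last Ls \<in> carrier_mat MM MM" using uLast unitaryD by auto
    have fsC: "final_state n (m1 + m2) C x = evolve n (m1 + m2) x Ks (J *\<^sub>v evolve n (m1 + m2) x (tl Ls) (hd Ls *\<^sub>v unit_vec MM 0))"
      unfolding final_state_def C_def MM_def[symmetric]
      by (rule run_junction[OF Lsne JC[unfolded MM_def] LC[unfolded MM_def] e0c[unfolded MM_def], folded MM_def])
    have step1: "hd Ls *\<^sub>v unit_vec MM 0 = vt H1 e2 (U0 *\<^sub>v e1)"
    proof -
      have "hd Ls *\<^sub>v unit_vec MM 0 = tens H1 (1\<^sub>m H2) U0 *\<^sub>v vt H1 e2 e1"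
        unfolding Ls_def lift1_def U0_def e0 hd_map[OF A1(1)] ..
      also have "\<dots> = vt H1 (1\<^sub>m H2 *\<^sub>v e2) (U0 *\<^sub>v e1)" by (rule vt_mult[OF one_carrier_mat U0 e2c e1c])
      also have "1\<^sub>m H2 *\<^sub>v e2 = e2" using e2c by simp
      finally show ?thesis .
    qed
    have step2: "evolve n (m1 + m2) x (tl Ls) (vt H1 e2 (U0 *\<^sub>v e1)) = vt H1 e2 \<phi>1"
    proof -
      have "evolve n (m1 + m2) x (tl Ls) (vt H1 e2 (U0 *\<^sub>v e1))
          = evolve n (m2 + m1) x (map (\<lambda>V. tens (2 ^ m1) (1\<^sub>m (2 ^ m2)) V) (tl Us1)) (vt (2 ^ m1) e2 (U0 *\<^sub>v e1))"
        unfolding Ls_def lift1_def map_tl H1_def H2_def by (simp add: add.commute)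
      also have "\<dots> = vt (2 ^ m1) e2 (evolve n m1 x (tl Us1) (U0 *\<^sub>v e1))"
      proof (rule evolve_lift)
        show "idx_qubits n < m1" by (rule A1(2))
        show "\<forall>V\<in>set (tl Us1). V \<in> carrier_mat (2 ^ m1) (2 ^ m1)" using c1 tl_sub[of Us1] unfolding H1_def by auto
        show "e2 \<in> carrier_vec (2 ^ m2)" using e2c unfolding H2_def .
        show "U0 *\<^sub>v e1 \<in> carrier_vec (2 ^ m1)" using U0e unfolding H1_def .
      qed
      also have "evolve n m1 x (tl Us1) (U0 *\<^sub>v e1) = \<phi>1" unfolding \<phi>1_def final_state_def U0_def e1_def H1_def ..
      finally show ?thesis unfolding H1_def .
    qed
    have step3: "J *\<^sub>v vt H1 e2 \<phi>1 = vt H2 \<phi>1 (V0 *\<^sub>v e2)"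
    proof -
      have L2c: "lift2 V0 \<in> carrier_mat (H1 * H2) (H1 * H2)" unfolding lift2_def using V0 by simp
      have SWc: "SW \<in> carrier_mat (H1 * H2) (H1 * H2)" unfolding SW_def by simp
      have vc: "vt H1 e2 \<phi>1 \<in> carrier_vec (H1 * H2)" using vt_carrier[OF e2c, of H1] h12 h21 by simp
      have "J *\<^sub>v vt H1 e2 \<phi>1 = lift2 V0 *\<^sub>v (SW *\<^sub>v vt H1 e2 \<phi>1)"
        unfolding J_def V0_def[symmetric] by (rule assoc_mult_mat_vec[OF L2c SWc vc])
      also have "SW *\<^sub>v vt H1 e2 \<phi>1 = vt H2 \<phi>1 e2" unfolding SW_def by (rule swap_vt[OF p1 e2c])
      also have "lift2 V0 *\<^sub>v vt H2 \<phi>1 e2 = vt H2 (1\<^sub>m H1 *\<^sub>v \<phi>1) (V0 *\<^sub>v e2)"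
        unfolding lift2_def by (rule vt_mult[OF one_carrier_mat V0 p1 e2c])
      also have "1\<^sub>m H1 *\<^sub>v \<phi>1 = \<phi>1" using p1 by simp
      finally show ?thesis .
    qed
    have step4: "evolve n (m1 + m2) x Ks (vt H2 \<phi>1 (V0 *\<^sub>v e2)) = vt H2 \<phi>1 \<phi>2"
    proof -
      have "evolve n (m1 + m2) x Ks (vt H2 \<phi>1 (V0 *\<^sub>v e2))
          = evolve n (m1 + m2) x (map (\<lambda>V. tens (2 ^ m2) (1\<^sub>m (2 ^ m1)) V) (tl Us2)) (vt (2 ^ m2) \<phi>1 (V0 *\<^sub>v e2))"
        unfolding Ks_def lift2_def H1_def H2_def ..
      also have "\<dots> = vt (2 ^ m2) \<phi>1 (evolve n m2 x (tl Us2) (V0 *\<^sub>v e2))"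
      proof (rule evolve_lift)
        show "idx_qubits n < m2" by (rule A2(2))
        show "\<forall>V\<in>set (tl Us2). V \<in> carrier_mat (2 ^ m2) (2 ^ m2)" using c2 tl_sub[of Us2] unfolding H2_def by auto
        show "\<phi>1 \<in> carrier_vec (2 ^ m1)" using p1 unfolding H1_def .
        show "V0 *\<^sub>v e2 \<in> carrier_vec (2 ^ m2)" using V0e unfolding H2_def .
      qed
      also have "evolve n m2 x (tl Us2) (V0 *\<^sub>v e2) = \<phi>2" unfolding \<phi>2_def final_state_def V0_def e2_def H2_def ..
      finally show ?thesis unfolding H2_def .
    qed
    have fs: "final_state n (m1 + m2) C x = vt H2 \<phi>1 \<phi>2"
      unfolding fsC step1 step2 step3 step4 ..
    show ?thesis unfolding alg_output_def fs \<phi>1_def \<phi>2_def H2_def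
      by (rule pt_prod[OF A1(4) A2(4) final_state_carrier[OF V1] final_state_carrier[OF V2]])
  qed
  show ?thesis using validC lenC outC by blast
qed


lemma core: assumes "QSZK_ach n D f k" shows "QS_ach n D f k"
proof -
  obtain m1 Us1 S1 m2 Us2 S2 where V1: "valid_alg n m1 Us1 S1" and V2: "valid_alg n m2 Us2 S2"
    and len: "(length Us1 - 1) + (length Us2 - 1) = k"
    and dimeq: "\<forall>x\<in>D. dim_row (alg_output n m1 Us1 S1 x) = dim_row (alg_output n m2 Us2 S2 x)"
    and yes: "\<forall>x\<in>D. f x \<longrightarrow> trace_dist (alg_output n m1 Us1 S1 x) (alg_output n m2 Us2 S2 x) \<ge> 2/3"
    and no: "\<forall>x\<in>D. \<not> f x \<longrightarrow> trace_dist (alg_output n m1 Us1 S1 x) (alg_output n m2 Us2 S2 x) \<le> 1/3"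
    using assms unfolding QSZK_ach_def by blast
  obtain Us where VC: "valid_alg n (m1 + m2) Us (S2 \<union> (+) m2 ` S1)"
    and lenC: "length Us = length Us1 + length Us2 - 1"
    and outC: "\<And>x. alg_output n (m1 + m2) Us (S2 \<union> (+) m2 ` S1) x
       = tens (2 ^ length (KK m2 S2)) (alg_output n m1 Us1 S1 x) (alg_output n m2 Us2 S2 x)"
    using combined[OF V1 V2] by blast
  have ne1: "Us1 \<noteq> []" and ne2: "Us2 \<noteq> []" using valid_algD(1)[OF V1] valid_algD(1)[OF V2] by auto
  have lenk: "length Us = k + 1" using lenC len ne1 ne2 by (cases Us1; cases Us2) auto
  define \<rho> where "\<rho> = alg_output n m1 Us1 S1"
  define \<sigma> where "\<sigma> = alg_output n m2 Us2 S2"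
  define d1 :: nat where "d1 = 2 ^ length (KK m1 S1)"
  define d2 :: nat where "d2 = 2 ^ length (KK m2 S2)"
  define T where "T = alg_output n (m1 + m2) Us (S2 \<union> (+) m2 ` S1)"
  have T: "\<And>x. T x = tens d2 (\<rho> x) (\<sigma> x)" unfolding T_def \<rho>_def \<sigma>_def d2_def by (rule outC)
  note R = alg_output_props[OF V1, folded \<rho>_def d1_def]
  note S = alg_output_props[OF V2, folded \<sigma>_def d2_def]
  have main: "schatten1 (T x - T y) \<ge> 1/3" if x: "x \<in> D" and y: "y \<in> D" and fx: "f x" and fy: "\<not> f y" for x y
  proof -
    have dd: "d1 = d2" using dimeq x R(1)[of x] S(1)[of x] unfolding \<rho>_def[symmetric] \<sigma>_def[symmetric] by auto
    have cs: "\<sigma> x \<in> carrier_mat d1 d1" "\<sigma> y \<in> carrier_mat d1 d1" using S(1) dd by auto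
    have tri: "schatten1 (\<rho> x - \<sigma> x) \<le> schatten1 (\<rho> x - \<rho> y) + schatten1 (\<rho> y - \<sigma> y) + schatten1 (\<sigma> x - \<sigma> y)"
      by (rule schatten_triangle3[OF R(1) cs(1) R(1) cs(2) R(2) S(2) R(2) S(2)])
    have t1: "schatten1 (\<rho> x - \<sigma> x) \<ge> 4/3" using yes x fx unfolding trace_dist_def \<rho>_def \<sigma>_def by fastforce
    have t2: "schatten1 (\<rho> y - \<sigma> y) \<le> 2/3" using no y fy unfolding trace_dist_def \<rho>_def \<sigma>_def by fastforce
    have l1: "schatten1 (\<rho> x - \<rho> y) \<le> schatten1 (T x - T y)"
      unfolding T by (rule tens_lower(1)[OF R(1) R(1) S(1) S(1) R(2) R(2) S(2) S(2) S(3) S(3)])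
    have l2: "schatten1 (\<sigma> x - \<sigma> y) \<le> schatten1 (T x - T y)"
      unfolding T by (rule tens_lower(2)[OF R(1) R(1) S(1) S(1) R(2) R(2) S(2) S(2) R(3) R(3)])
    show ?thesis using tri t1 t2 l1 l2 by linarith
  qed
  have cT: "\<And>x. T x \<in> carrier_mat (d1 * d2) (d1 * d2)" using R(1) unfolding T by simp
  show ?thesis unfolding QS_ach_def
  proof (intro exI conjI)
    show "valid_alg n (m1 + m2) Us (S2 \<union> (+) m2 ` S1)" by (rule VC)
    show "length Us = k + 1" by (rule lenk)
    show "\<forall>x\<in>D. \<forall>y\<in>D. f x \<noteq> f y \<longrightarrow> 1 / 6 \<le> trace_dist (alg_output n (m1 + m2) Us (S2 \<union> (+) m2 ` S1) x) (alg_output n (m1 + m2) Us (S2 \<union> (+) m2 ` S1) y)"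
    proof (intro ballI impI)
      fix x y assume x: "x \<in> D" and y: "y \<in> D" and fxy: "f x \<noteq> f y"
      have "schatten1 (T x - T y) \<ge> 1/3"
      proof (cases "f x")
        case True thus ?thesis using main[OF x y] fxy by auto
      next
        case False
        hence "schatten1 (T y - T x) \<ge> 1/3" using main[OF y x] fxy by auto
        thus ?thesis using schatten1_swap[OF cT cT] by simp
      qed
      thus "1 / 6 \<le> trace_dist (alg_output n (m1 + m2) Us (S2 \<union> (+) m2 ` S1) x) (alg_output n (m1 + m2) Us (S2 \<union> (+) m2 ` S1) y)"
        unfolding T_def[symmetric] trace_dist_def by simp
    qed
  qed
qed

theorem theorem2:
  fixes n :: nat and D :: "bool list set" and f :: "bool list \<Rightarrow> bool"
  assumes "\<forall>x\<in>D. length x = n"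
  shows "QS n D f \<le> QSZK n D f"
  unfolding QSZK_def
proof (rule Inf_greatest)
  fix z assume "z \<in> {enat k |k. QSZK_ach n D f k}"
  then obtain k where z: "z = enat k" and a: "QSZK_ach n D f k" by blast
  have "enat k \<in> {enat k |k. QS_ach n D f k}" using core[OF a] by blast
  thus "QS n D f \<le> z" unfolding QS_def z by (rule Inf_lower)
qed


end
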